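(* Let $A,B,A',B'$ be finite-dimensional physical systems with $|A||B|=|A'||B'|$, and let $\mathcal{U}(X)=UXU^*$ be a unitary channel from $AB$ to $A'B'$ that is Gibbs preserving, i.e. $\mathcal{U}(\gamma^{A}\otimes\gamma^{B})=\gamma^{A'}\otimes\gamma^{B'}$. Then the map defined for all states $\omega$ of $A$ by $$\mathcal{N}^{A\to A'}(\omega^A)\coloneqq \mathrm{Tr}_{B'}\left[\mathcal{U}^{AB\to A'B'}\left(\omega^A\otimes\gamma^B\right)\right]$$ is a thermal operation from $A$ to $A'$.
   Context: Every physical system $X$ is finite dimensional and has a Hamiltonian $H^X$ (a Hermitian, positive semidefinite operator); composite systems of non-interacting parts have Hamiltonian $H^{XY}=H^X\otimes I^Y+I^X\otimes H^Y$. A fixed inverse temperature $\beta>0$ is given, and the Gibbs state of $X$ is $\gamma^X=e^{-\beta H^X}/\mathrm{Tr}[e^{-\beta H^X}]$ (so $\gamma^{XY}=\gamma^X\otimes\gamma^Y$). A thermal operation from $A$ to $A'$ is a quantum channel (CPTP map) obtainable by composing the following three steps: (i) appending any system $C$ prepared in its Gibbs state $\gamma^C$; (ii) applying a unitary on a composite system that commutes with the total Hamiltonian of that composite system; (iii) tracing out (discarding) subsystems. *)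

theory Defs
  imports "Jordan_Normal_Form.Schur_Decomposition"
begin

(* All operators are complex matrices; a finite-dimensional system is described by
   its Hamiltonian, a dim x dim complex matrix. *)

definition mtrace :: "complex mat \<Rightarrow> complex" where
  "mtrace M = (\<Sum>i<dim_row M. M $$ (i,i))"

definition hermitian :: "complex mat \<Rightarrow> bool" where
  "hermitian M \<longleftrightarrow> square_mat M \<and> mat_adjoint M = M"

definition psd :: "complex mat \<Rightarrow> bool" where
  "psd M \<longleftrightarrow> hermitian M \<and>
     (\<forall>v. dim_vec v = dim_row M \<longrightarrow> 0 \<le> Re ((M *\<^sub>v v) \<bullet>c v))"

definition density :: "nat \<Rightarrow> complex mat \<Rightarrow> bool" where
  "density n \<rho> \<longleftrightarrow> \<rho> \<in> carrier_mat n n \<and> psd \<rho> \<and> mtrace \<rho> = 1"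

definition unitary :: "complex mat \<Rightarrow> bool" where
  "unitary U \<longleftrightarrow> square_mat U \<and> mat_adjoint U * U = 1\<^sub>m (dim_row U)
      \<and> U * mat_adjoint U = 1\<^sub>m (dim_row U)"

definition physical :: "complex mat \<Rightarrow> bool" where
  "physical H \<longleftrightarrow> square_mat H \<and> dim_row H > 0 \<and> psd H"

definition mexp :: "complex mat \<Rightarrow> complex mat" where
  "mexp A = mat (dim_row A) (dim_col A)
     (\<lambda>(i,j). (\<Sum>k. (A ^\<^sub>m k) $$ (i,j) / of_nat (fact k)))"

definition gibbs :: "real \<Rightarrow> complex mat \<Rightarrow> complex mat" where
  "gibbs \<beta> H = (let E = mexp ((- complex_of_real \<beta>) \<cdot>\<^sub>m H) in (1 / mtrace E) \<cdot>\<^sub>m E)"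

definition kron :: "complex mat \<Rightarrow> complex mat \<Rightarrow> complex mat" where
  "kron A B = mat (dim_row A * dim_row B) (dim_col A * dim_col B)
     (\<lambda>(i,j). A $$ (i div dim_row B, j div dim_col B) * B $$ (i mod dim_row B, j mod dim_col B))"

definition ham_sum :: "complex mat \<Rightarrow> complex mat \<Rightarrow> complex mat" where
  "ham_sum HX HY = kron HX (1\<^sub>m (dim_row HY)) + kron (1\<^sub>m (dim_row HX)) HY"

(* partial trace over the middle factor of a system of dimension d1 * d2 * d3
   (index (a*d2 + b)*d3 + c), leaving a d1*d3 dimensional operator *)
definition ptrace_mid :: "nat \<Rightarrow> nat \<Rightarrow> nat \<Rightarrow> complex mat \<Rightarrow> complex mat" where
  "ptrace_mid d1 d2 d3 M = mat (d1 * d3) (d1 * d3)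
     (\<lambda>(i,j). \<Sum>b<d2. M $$ ((i div d3 * d2 + b) * d3 + i mod d3,
                              (j div d3 * d2 + b) * d3 + j mod d3))"

definition ptrace2 :: "nat \<Rightarrow> nat \<Rightarrow> complex mat \<Rightarrow> complex mat" where
  "ptrace2 dX dY M = ptrace_mid dX dY 1 M"

(* Composite systems are lists of (non-interacting) component systems,
   each given by its Hamiltonian. *)
definition sys_dim :: "complex mat list \<Rightarrow> nat" where
  "sys_dim S = prod_list (map dim_row S)"

definition sys_ham :: "complex mat list \<Rightarrow> complex mat" where
  "sys_ham S = foldl ham_sum (0\<^sub>m 1 1) S"

(* Elementary steps of thermal operations, as channels (maps on operators) from the
   system given as first argument to the system given as second argument. *)
inductive thermal_step :: "real \<Rightarrow> complex mat list \<Rightarrow> complex mat list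
    \<Rightarrow> (complex mat \<Rightarrow> complex mat) \<Rightarrow> bool" for \<beta> where
  append_gibbs: "physical HC \<Longrightarrow>
     thermal_step \<beta> S (S @ [HC]) (\<lambda>\<rho>. kron \<rho> (gibbs \<beta> HC))"
| energy_unitary: "unitary U \<Longrightarrow> U \<in> carrier_mat (sys_dim S) (sys_dim S) \<Longrightarrow>
     U * sys_ham S = sys_ham S * U \<Longrightarrow>
     thermal_step \<beta> S S (\<lambda>\<rho>. U * \<rho> * mat_adjoint U)"
| trace_out: "k < length S \<Longrightarrow>
     thermal_step \<beta> S (take k S @ drop (Suc k) S)
       (ptrace_mid (sys_dim (take k S)) (dim_row (S ! k)) (sys_dim (drop (Suc k) S)))"

inductive thermal_op :: "real \<Rightarrow> complex mat list \<Rightarrow> complex mat list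
    \<Rightarrow> (complex mat \<Rightarrow> complex mat) \<Rightarrow> bool" for \<beta> where
  refl: "thermal_op \<beta> S S (\<lambda>\<rho>. \<rho>)"
| step: "thermal_op \<beta> S S' N \<Longrightarrow> thermal_step \<beta> S' S'' M \<Longrightarrow>
     thermal_op \<beta> S S'' (M \<circ> N)"

end

theory Submission
  imports Defs "Jordan_Normal_Form.Spectral_Radius"
begin

lemma sum_split_prod: "(\<Sum>k<(a::nat)*b. f k) = (\<Sum>x<a. \<Sum>y<b. (f (x*b+y) :: 'a::comm_monoid_add))"
proof -
  have "(\<Sum>k<a*b. f k) = (\<Sum>x<a. sum f {x*b..<x*b+b})" by (rule sum.nat_group[symmetric])
  also have "\<dots> = (\<Sum>x<a. \<Sum>y<b. f (x*b+y))"
  proof (rule sum.cong[OF HOL.refl])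
    fix x
    have "sum f {0 + x*b..<b + x*b} = sum (\<lambda>i. f (i + x*b)) {0..<b}" by (rule sum.shift_bounds_nat_ivl)
    then show "sum f {x*b..<x*b+b} = (\<Sum>y<b. f (x*b+y))" by (simp add: atLeast0LessThan add.commute)
  qed
  finally show ?thesis .
qed

section \<open>adjoint\<close>

type_synonym cmat = "complex mat"


lemma adj_dim[simp]: "dim_row (mat_adjoint (A::cmat)) = dim_col A" "dim_col (mat_adjoint (A::cmat)) = dim_row A"
  unfolding mat_adjoint_def by auto

lemma adj_index[simp]: "i < dim_col A \<Longrightarrow> j < dim_row A \<Longrightarrow> mat_adjoint (A::cmat) $$ (i,j) = cnj (A $$ (j,i))"
  unfolding mat_adjoint_def by (simp add: mat_of_rows_def conjugate_vec_def)

lemma adj_carrier[simp]: "A \<in> carrier_mat n m \<Longrightarrow> mat_adjoint (A::cmat) \<in> carrier_mat m n"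
  by auto

lemma adj_adj[simp]: "mat_adjoint (mat_adjoint (A::cmat)) = A"
  by (rule eq_matI) auto

lemma adj_mult: assumes "A \<in> carrier_mat n m" "B \<in> carrier_mat m p"
  shows "mat_adjoint (A * B) = mat_adjoint B * mat_adjoint (A::cmat)"
  apply (rule eq_matI) using assms 
  by (auto simp: scalar_prod_def intro!: sum.cong)

lemma adj_one[simp]: "mat_adjoint (1\<^sub>m n :: cmat) = 1\<^sub>m n"
  by (rule eq_matI) auto

lemma adj_smult: "mat_adjoint (k \<cdot>\<^sub>m A) = cnj k \<cdot>\<^sub>m mat_adjoint (A::cmat)"
  by (rule eq_matI) auto

lemma adj_add: assumes "A \<in> carrier_mat n m" "B \<in> carrier_mat n m"
  shows "mat_adjoint (A + B) = mat_adjoint (A::cmat) + mat_adjoint B"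
  apply (rule eq_matI) using assms by auto

lemma unitaryD: assumes "unitary U" "U \<in> carrier_mat n n"
  shows "mat_adjoint U * U = 1\<^sub>m n" "U * mat_adjoint U = 1\<^sub>m n"
  using assms unfolding unitary_def by auto

section \<open>Kronecker\<close>

lemma idx_lt: "x < (a::nat) \<Longrightarrow> y < b \<Longrightarrow> x*b+y < a*b"
proof -
  assume "x < a" "y < b"
  then have "x*b + y < x*b + b" by simp
  also have "\<dots> = (Suc x) * b" by simp
  also have "\<dots> \<le> a * b" using \<open>x < a\<close> by (intro mult_right_mono) auto
  finally show ?thesis .
qed


lemma kron_dim[simp]: "dim_row (kron A B) = dim_row A * dim_row B" "dim_col (kron A B) = dim_col A * dim_col B"
  unfolding kron_def by auto

lemma kron_carrier[simp]: "A \<in> carrier_mat a a' \<Longrightarrow> B \<in> carrier_mat b b' \<Longrightarrow> kron A B \<in> carrier_mat (a*b) (a'*b')"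
  by auto

lemma kron_index[simp]: "i < dim_row A * dim_row B \<Longrightarrow> j < dim_col A * dim_col B \<Longrightarrow>
  kron A B $$ (i,j) = A $$ (i div dim_row B, j div dim_col B) * B $$ (i mod dim_row B, j mod dim_col B)"
  unfolding kron_def by auto

lemma div_mod_lt: "i < a * b \<Longrightarrow> i div b < (a::nat)" "i < a * b \<Longrightarrow> i mod b < (b::nat)"
  apply (simp add: less_mult_imp_div_less)
  by (metis mod_less_divisor mult_zero_right not_gr_zero not_less_zero)

lemma kron_mult: assumes A: "A \<in> carrier_mat a a'" and B: "B \<in> carrier_mat b b'"
  and C: "C \<in> carrier_mat a' a''" and D: "D \<in> carrier_mat b' b''"
  shows "kron A B * kron C D = kron (A * C) (B * D)"
proof (rule eq_matI)
  fix i j assume i: "i < dim_row (kron (A * C) (B * D))" and j: "j < dim_col (kron (A * C) (B * D))"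
  have i': "i < a * b" and j': "j < a'' * b''" using i j A B C D by auto
  note dm = div_mod_lt[OF i'] div_mod_lt[OF j']
  have "(kron A B * kron C D) $$ (i,j) = (\<Sum>k<a'*b'. kron A B $$ (i,k) * kron C D $$ (k,j))"
    using A B C D i' j' by (simp add: scalar_prod_def atLeast0LessThan)
  also have "\<dots> = (\<Sum>x<a'. \<Sum>y<b'. kron A B $$ (i,x*b'+y) * kron C D $$ (x*b'+y,j))"
    by (rule sum_split_prod)
  also have "\<dots> = (\<Sum>x<a'. \<Sum>y<b'. (A $$ (i div b, x) * C $$ (x, j div b'')) * (B $$ (i mod b, y) * D $$ (y, j mod b'')))"
  proof (rule sum.cong[OF HOL.refl], rule sum.cong[OF HOL.refl])
    fix x y assume x: "x \<in> {..<a'}" and y: "y \<in> {..<b'}"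
    have xy: "x*b'+y < a'*b'" using x y by (simp add: idx_lt)
    have e1: "(x*b'+y) div b' = x" "(x*b'+y) mod b' = y" using y by auto
    show "kron A B $$ (i,x*b'+y) * kron C D $$ (x*b'+y,j) = (A $$ (i div b, x) * C $$ (x, j div b'')) * (B $$ (i mod b, y) * D $$ (y, j mod b''))"
      using A B C D i' j' xy e1 by (simp add: ac_simps)
  qed
  also have "\<dots> = (\<Sum>x<a'. A $$ (i div b, x) * C $$ (x, j div b'')) * (\<Sum>y<b'. B $$ (i mod b, y) * D $$ (y, j mod b''))"
    by (simp add: sum_product)
  also have "\<dots> = kron (A * C) (B * D) $$ (i,j)"
    using A B C D i' j' dm by (simp add: scalar_prod_def atLeast0LessThan)
  finally show "(kron A B * kron C D) $$ (i,j) = kron (A * C) (B * D) $$ (i,j)" .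
qed (use A B C D in auto)


lemma kron_adj: "mat_adjoint (kron A B) = kron (mat_adjoint A) (mat_adjoint B)"
  by (rule eq_matI) (auto simp: div_mod_lt)

lemma kron_one: "kron (1\<^sub>m a) (1\<^sub>m b) = 1\<^sub>m (a*b)"
proof (rule eq_matI)
  fix i j assume "i < dim_row (1\<^sub>m (a*b) :: cmat)" "j < dim_col (1\<^sub>m (a*b) :: cmat)"
  then have i: "i < a*b" and j: "j < a*b" by auto
  have "i = j \<longleftrightarrow> i div b = j div b \<and> i mod b = j mod b"
    by (metis div_mult_mod_eq)
  then show "kron (1\<^sub>m a) (1\<^sub>m b) $$ (i, j) = 1\<^sub>m (a*b) $$ (i,j)"
    using i j div_mod_lt[OF i] div_mod_lt[OF j] by auto
qed auto

lemma kron_add_left: "A \<in> carrier_mat n m \<Longrightarrow> A' \<in> carrier_mat n m \<Longrightarrow> kron (A + A') B = kron A B + kron A' B"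
  by (rule eq_matI) (auto simp: div_mod_lt algebra_simps)

lemma kron_add_right: "B \<in> carrier_mat n m \<Longrightarrow> B' \<in> carrier_mat n m \<Longrightarrow> kron A (B + B') = kron A B + kron A B'"
  by (rule eq_matI) (auto simp: div_mod_lt algebra_simps)

lemma kron_smult_left: "kron (k \<cdot>\<^sub>m A) B = k \<cdot>\<^sub>m kron A B"
  by (rule eq_matI) (auto simp: div_mod_lt algebra_simps)

lemma kron_smult_right: "kron A (k \<cdot>\<^sub>m B) = k \<cdot>\<^sub>m kron A B"
  by (rule eq_matI) (auto simp: div_mod_lt algebra_simps)

lemma div_mod_assoc: "(i::nat) div (b*c) = i div c div b" "i mod (b*c) div c = i div c mod b" "i mod (b*c) mod c = i mod c"
proof -
  show "(i::nat) div (b*c) = i div c div b" by (metis div_mult2_eq mult.commute)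
  have e: "i mod (c*b) = c * (i div c mod b) + i mod c" by (rule mod_mult2_eq)
  show "i mod (b*c) div c = i div c mod b"
  proof (cases "c = 0")
    case False then show ?thesis using e by (simp add: mult.commute)
  qed simp
  show "i mod (b*c) mod c = i mod c" by (metis e mult.commute mod_mult_self3 mod_mod_trivial)
qed

lemma kron_assoc: "kron (kron A B) C = kron A (kron B C)"
  by (rule eq_matI) (auto simp: div_mod_lt div_mod_assoc mult.assoc)

lemma kron_one1_left: "kron (1\<^sub>m 1) H = H"
  by (rule eq_matI) auto

lemma kron_zero1_left: "kron (0\<^sub>m 1 1) H = 0\<^sub>m (dim_row H) (dim_col H)"
  by (rule eq_matI) auto

lemma ham_sum_carrier: "X \<in> carrier_mat a a \<Longrightarrow> Y \<in> carrier_mat b b \<Longrightarrow> ham_sum X Y \<in> carrier_mat (a*b) (a*b)"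
  unfolding ham_sum_def by auto

lemma ham_sum_zero: "H \<in> carrier_mat n n \<Longrightarrow> ham_sum (0\<^sub>m 1 1) H = H"
  unfolding ham_sum_def kron_zero1_left kron_one1_left by auto

lemma ham_sum_assoc: assumes X: "X \<in> carrier_mat a a" and Y: "Y \<in> carrier_mat b b" and Z: "Z \<in> carrier_mat c c"
  shows "ham_sum (ham_sum X Y) Z = ham_sum X (ham_sum Y Z)"
proof -
  have "ham_sum (ham_sum X Y) Z = kron (kron X (1\<^sub>m b) + kron (1\<^sub>m a) Y) (1\<^sub>m c) + kron (1\<^sub>m (a*b)) Z"
    using X Y Z unfolding ham_sum_def by auto
  also have "\<dots> = kron X (1\<^sub>m (b*c)) + kron (1\<^sub>m a) (kron Y (1\<^sub>m c)) + kron (1\<^sub>m a) (kron (1\<^sub>m b) Z)"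
    using X Y Z by (simp add: kron_add_left[of _ "a*b" "a*b"] kron_assoc kron_one[symmetric])
  also have "\<dots> = ham_sum X (ham_sum Y Z)"
    using X Y Z unfolding ham_sum_def
    by (simp add: kron_add_right[of _ "b*c" "b*c"] assoc_add_mat[of _ "a*(b*c)" "a*(b*c)"])
  finally show ?thesis .
qed

lemma ptrace_kron: assumes P: "P \<in> carrier_mat d2 d2" and Q: "Q \<in> carrier_mat d3 d3"
  and t: "mtrace P = 1"
  shows "ptrace_mid 1 d2 d3 (kron P Q) = Q"
proof (rule eq_matI)
  fix i j assume "i < dim_row Q" "j < dim_col Q"
  then have i: "i < d3" and j: "j < d3" using Q by auto
  have "ptrace_mid 1 d2 d3 (kron P Q) $$ (i,j) = (\<Sum>b<d2. kron P Q $$ (b * d3 + i, b * d3 + j))"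
    unfolding ptrace_mid_def using i j by simp
  also have "\<dots> = (\<Sum>b<d2. P $$ (b,b) * Q $$ (i,j))"
  proof (rule sum.cong[OF HOL.refl])
    fix b assume "b \<in> {..<d2}"
    then have "b * d3 + i < d2 * d3" "b * d3 + j < d2 * d3" using i j by (auto simp: idx_lt)
    then show "kron P Q $$ (b * d3 + i, b * d3 + j) = P $$ (b,b) * Q $$ (i,j)"
      using P Q i j by simp
  qed
  also have "\<dots> = mtrace P * Q $$ (i,j)" using P unfolding mtrace_def by (simp add: sum_distrib_right)
  finally show "ptrace_mid 1 d2 d3 (kron P Q) $$ (i,j) = Q $$ (i,j)" using t by simp
qed (use Q in \<open>auto simp: ptrace_mid_def\<close>)


section \<open>Diagonal matrices and exponentials\<close>

definition dm :: "nat \<Rightarrow> (nat \<Rightarrow> complex) \<Rightarrow> cmat" where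
  "dm n d = mat n n (\<lambda>(i,j). if i = j then d i else 0)"

lemma dm_carrier[simp]: "dm n d \<in> carrier_mat n n" "dim_row (dm n d) = n" "dim_col (dm n d) = n"
  unfolding dm_def by auto

lemma dm_index[simp]: "i < n \<Longrightarrow> j < n \<Longrightarrow> dm n d $$ (i,j) = (if i = j then d i else 0)"
  unfolding dm_def by auto

lemma dm_mult: "dm n a * dm n b = dm n (\<lambda>i. a i * b i)"
  by (rule eq_matI) (auto simp: scalar_prod_def if_distrib cong: if_cong)

lemma dm_one: "dm n (\<lambda>_. 1) = 1\<^sub>m n"
  by (rule eq_matI) auto

lemma dm_smult: "k \<cdot>\<^sub>m dm n a = dm n (\<lambda>i. k * a i)"
  by (rule eq_matI) auto

lemma conj_diag_index: fixes V :: cmat assumes V: "V \<in> carrier_mat n n" and i: "i < n" and j: "j < n"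
  shows "(V * dm n e * mat_adjoint V) $$ (i,j) = (\<Sum>a<n. V $$ (i,a) * e a * cnj (V $$ (j,a)))"
proof -
  have "(V * dm n e * mat_adjoint V) $$ (i,j) = (\<Sum>b<n. (V * dm n e) $$ (i,b) * cnj (V $$ (j,b)))"
    using V i j by (simp add: scalar_prod_def atLeast0LessThan)
  also have "\<dots> = (\<Sum>b<n. V $$ (i,b) * e b * cnj (V $$ (j,b)))"
  proof (rule sum.cong[OF HOL.refl])
    fix b assume b: "b \<in> {..<n}"
    have "(V * dm n e) $$ (i,b) = (\<Sum>a<n. V $$ (i,a) * (if a = b then e a else 0))"
      using V i b by (simp add: scalar_prod_def atLeast0LessThan)
    also have "\<dots> = V $$ (i,b) * e b" using b by (simp add: if_distrib cong: if_cong)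
    finally show "(V * dm n e) $$ (i,b) * cnj (V $$ (j,b)) = V $$ (i,b) * e b * cnj (V $$ (j,b))" by simp
  qed
  finally show ?thesis .
qed

lemma adj_cancel: fixes V :: cmat assumes V: "V \<in> carrier_mat n n" and VV: "mat_adjoint V * V = 1\<^sub>m n"
  and X: "X \<in> carrier_mat n m"
  shows "mat_adjoint V * (V * X) = X"
proof -
  have "mat_adjoint V * (V * X) = (mat_adjoint V * V) * X" using V X by (simp add: assoc_mult_mat[of _ n n _ n _ m])
  then show ?thesis using VV X by simp
qed

lemma conj_mult: fixes V :: cmat assumes V: "V \<in> carrier_mat n n" and VV: "mat_adjoint V * V = 1\<^sub>m n"
  and A: "A \<in> carrier_mat n n" and B: "B \<in> carrier_mat n n"
  shows "(V * A * mat_adjoint V) * (V * B * mat_adjoint V) = V * (A * B) * mat_adjoint V"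
proof -
  have Va: "mat_adjoint V \<in> carrier_mat n n" using V by simp
  have c: "mat_adjoint V * (V * (B * mat_adjoint V)) = B * mat_adjoint V"
    using adj_cancel[OF V VV, of "B * mat_adjoint V" n] B Va by simp
  show ?thesis
    using V A B Va c by (simp add: assoc_mult_mat[of _ n n _ n _ n])
qed

lemma conj_pow: fixes V :: cmat assumes V: "V \<in> carrier_mat n n" and VV: "mat_adjoint V * V = 1\<^sub>m n"
  and VV': "V * mat_adjoint V = 1\<^sub>m n"
  shows "(V * dm n d * mat_adjoint V) ^\<^sub>m k = V * dm n (\<lambda>i. d i ^ k) * mat_adjoint V"
proof (induction k)
  case 0
  show ?case using V VV' by (simp add: dm_one)
next
  case (Suc k)
  have "(V * dm n d * mat_adjoint V) ^\<^sub>m Suc k = (V * dm n (\<lambda>i. d i ^ k) * mat_adjoint V) * (V * dm n d * mat_adjoint V)"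
    using Suc by simp
  also have "\<dots> = V * dm n (\<lambda>i. d i ^ Suc k) * mat_adjoint V"
    using conj_mult[OF V VV, of "dm n (\<lambda>i. d i ^ k)" "dm n d"] by (simp add: dm_mult mult.commute)
  finally show ?case .
qed

lemma exp_sums_c: "(\<lambda>k. (d::complex) ^ k / of_nat (fact k)) sums exp d"
proof -
  have "(\<lambda>k. d ^ k /\<^sub>R fact k) sums exp d" by (rule exp_converges)
  moreover have "(\<lambda>k. d ^ k /\<^sub>R fact k) = (\<lambda>k. d ^ k / of_nat (fact k))"
    by (rule ext) (simp add: scaleR_conv_of_real field_simps)
  ultimately show ?thesis by simp
qed

lemma mexp_conj_diag: fixes V :: cmat assumes V: "V \<in> carrier_mat n n" and VV: "mat_adjoint V * V = 1\<^sub>m n"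
  and VV': "V * mat_adjoint V = 1\<^sub>m n"
  shows "mexp (V * dm n d * mat_adjoint V) = V * dm n (\<lambda>i. exp (d i)) * mat_adjoint V"
proof (rule eq_matI)
  fix i j assume "i < dim_row (V * dm n (\<lambda>i. exp (d i)) * mat_adjoint V)"
    "j < dim_col (V * dm n (\<lambda>i. exp (d i)) * mat_adjoint V)"
  then have i: "i < n" and j: "j < n" using V by auto
  have s: "(\<lambda>k. V $$ (i,a) * d a ^ k * cnj (V $$ (j,a)) / of_nat (fact k)) sums (V $$ (i,a) * exp (d a) * cnj (V $$ (j,a)))" for a
  proof -
    have "(\<lambda>k. d a ^ k / of_nat (fact k)) sums exp (d a)" by (rule exp_sums_c)
    then have "(\<lambda>k. (V $$ (i,a) * cnj (V $$ (j,a))) * (d a ^ k / of_nat (fact k))) sums ((V $$ (i,a) * cnj (V $$ (j,a))) * exp (d a))"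
      by (rule sums_mult)
    then show ?thesis by (simp add: ac_simps)
  qed
  have e1: "((V * dm n d * mat_adjoint V) ^\<^sub>m k) $$ (i,j) / of_nat (fact k)
     = (\<Sum>a<n. V $$ (i,a) * d a ^ k * cnj (V $$ (j,a)) / of_nat (fact k))" for k
  proof -
    have "((V * dm n d * mat_adjoint V) ^\<^sub>m k) $$ (i,j) = (\<Sum>a<n. V $$ (i,a) * d a ^ k * cnj (V $$ (j,a)))"
      unfolding conj_pow[OF V VV VV'] by (rule conj_diag_index[OF V i j])
    then show ?thesis by (simp add: sum_divide_distrib)
  qed
  have "mexp (V * dm n d * mat_adjoint V) $$ (i,j) = (\<Sum>k. ((V * dm n d * mat_adjoint V) ^\<^sub>m k) $$ (i,j) / of_nat (fact k))"
    unfolding mexp_def using V i j by simp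
  also have "\<dots> = (\<Sum>k. \<Sum>a<n. V $$ (i,a) * d a ^ k * cnj (V $$ (j,a)) / of_nat (fact k))"
    by (simp only: e1)
  also have "\<dots> = (\<Sum>a<n. \<Sum>k. V $$ (i,a) * d a ^ k * cnj (V $$ (j,a)) / of_nat (fact k))"
    by (rule suminf_sum) (use s sums_summable in blast)
  also have "\<dots> = (\<Sum>a<n. V $$ (i,a) * exp (d a) * cnj (V $$ (j,a)))"
    by (rule sum.cong[OF HOL.refl]) (rule sums_unique[symmetric], rule s)
  also have "\<dots> = (V * dm n (\<lambda>i. exp (d i)) * mat_adjoint V) $$ (i,j)"
    by (rule conj_diag_index[OF V i j, symmetric])
  finally show "mexp (V * dm n d * mat_adjoint V) $$ (i,j) = (V * dm n (\<lambda>i. exp (d i)) * mat_adjoint V) $$ (i,j)" .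
qed (use V in \<open>auto simp: mexp_def\<close>)

lemma mtrace_conj_diag: fixes V :: cmat assumes V: "V \<in> carrier_mat n n" and VV: "mat_adjoint V * V = 1\<^sub>m n"
  shows "mtrace (V * dm n e * mat_adjoint V) = (\<Sum>a<n. e a)"
proof -
  have "mtrace (V * dm n e * mat_adjoint V) = (\<Sum>i<n. \<Sum>a<n. V $$ (i,a) * e a * cnj (V $$ (i,a)))"
  proof -
    have "dim_row (V * dm n e * mat_adjoint V) = n" using V by simp
    then show ?thesis unfolding mtrace_def using conj_diag_index[OF V] by (intro sum.cong) (simp_all del: index_mult_mat)
  qed
  also have "\<dots> = (\<Sum>a<n. e a * (\<Sum>i<n. cnj (V $$ (i,a)) * V $$ (i,a)))"
    by (subst sum.swap) (simp add: sum_distrib_left ac_simps)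
  also have "\<dots> = (\<Sum>a<n. e a)"
  proof (rule sum.cong[OF HOL.refl])
    fix a assume a: "a \<in> {..<n}"
    have "(mat_adjoint V * V) $$ (a,a) = (\<Sum>i<n. cnj (V $$ (i,a)) * V $$ (i,a))"
      using V a by (simp add: scalar_prod_def atLeast0LessThan)
    then show "e a * (\<Sum>i<n. cnj (V $$ (i,a)) * V $$ (i,a)) = e a" using VV a by simp
  qed
  finally show ?thesis .
qed

lemma sum_split_at: assumes "k \<le> (n::nat)"
  shows "(\<Sum>j<n. f j) = (\<Sum>j<k. f j) + (\<Sum>t<n-k. (f (k+t) :: 'a::comm_monoid_add))"
proof -
  have "{..<n} = {..<k} \<union> {k..<n}" using assms by auto
  then have "(\<Sum>j<n. f j) = sum f ({..<k} \<union> {k..<n})" by simp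
  also have "\<dots> = (\<Sum>j<k. f j) + (\<Sum>j\<in>{k..<n}. f j)"
    by (rule sum.union_disjoint) auto
  finally have "(\<Sum>j<n. f j) = (\<Sum>j<k. f j) + (\<Sum>j\<in>{k..<n}. f j)" .
  also have "(\<Sum>j\<in>{k..<n}. f j) = (\<Sum>t<n-k. f (k+t))"
  proof -
    have "sum f {0 + k..<(n-k) + k} = sum (\<lambda>t. f (t + k)) {0..<n-k}" by (rule sum.shift_bounds_nat_ivl)
    then show ?thesis using assms by (simp add: atLeast0LessThan add.commute)
  qed
  finally show ?thesis .
qed

lemma delta_sum_l: "i < (n::nat) \<Longrightarrow> (\<Sum>l<n. (if i = l then 1 else 0) * (f l :: complex)) = f i"
proof -
  assume i: "i < n"
  have "(\<Sum>l<n. (if i = l then 1 else 0) * (f l :: complex)) = (\<Sum>l<n. if i = l then f i else 0)"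
    by (rule sum.cong) auto
  then show ?thesis using i by (simp add: sum.delta sum.delta')
qed
lemma delta_sum_r: "j < (n::nat) \<Longrightarrow> (\<Sum>l<n. (f l :: complex) * (if l = j then 1 else 0)) = f j"
proof -
  assume i: "j < n"
  have "(\<Sum>l<n. (f l :: complex) * (if l = j then 1 else 0)) = (\<Sum>l<n. if j = l then f j else 0)"
    by (rule sum.cong) auto
  then show ?thesis using i by (simp add: sum.delta sum.delta')
qed
lemma cnj_mult_self: "cnj z * z = complex_of_real ((cmod z)^2)"
  by (subst complex_norm_square) (rule mult.commute)

definition hh :: "nat \<Rightarrow> (nat \<Rightarrow> complex) \<Rightarrow> cmat" where
 "hh n u = mat n n (\<lambda>(i,j). (if i = j then 1 else 0) - complex_of_real (2 / (\<Sum>l<n. (cmod (u l))^2)) * u i * cnj (u j))"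

lemma hh_carrier[simp]: "hh n u \<in> carrier_mat n n" "dim_row (hh n u) = n" "dim_col (hh n u) = n"
  unfolding hh_def by auto

lemma hh_adj: "mat_adjoint (hh n u) = hh n u"
  by (rule eq_matI) (auto simp: hh_def)

lemma hh_sq: "hh n u * hh n u = 1\<^sub>m n"
proof (rule eq_matI)
  fix i j assume "i < dim_row (1\<^sub>m n :: cmat)" "j < dim_col (1\<^sub>m n :: cmat)"
  then have i: "i < n" and j: "j < n" by auto
  define s where "s = (\<Sum>l<n. (cmod (u l))^2)"
  define c where "c = complex_of_real (2 / s)"
  have S: "(\<Sum>l<n. cnj (u l) * u l) = complex_of_real s"
    unfolding s_def of_real_sum by (rule sum.cong) (simp_all only: cnj_mult_self)
  have cs: "c * c * complex_of_real s = 2 * c"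
  proof (cases "s = 0")
    case True then show ?thesis by (simp add: c_def)
  next
    case False then show ?thesis unfolding c_def by (simp add: field_simps power2_eq_square)
  qed
  have "(hh n u * hh n u) $$ (i,j) = (\<Sum>l<n. ((if i = l then 1 else 0) - c * u i * cnj (u l)) * ((if l = j then 1 else 0) - c * u l * cnj (u j)))"
    using i j by (simp add: scalar_prod_def atLeast0LessThan hh_def s_def c_def)
  also have "\<dots> = (\<Sum>l<n. (if i = l then 1 else 0) * ((if l = j then 1 else 0) - c * u l * cnj (u j)))
      - (\<Sum>l<n. (c * u i * cnj (u l)) * (if l = j then 1 else 0))
      + (\<Sum>l<n. c * c * u i * cnj (u j) * (cnj (u l) * u l))"
    by (simp add: algebra_simps sum.distrib sum_subtractf)
  also have "\<dots> = ((if i = j then 1 else 0) - c * u i * cnj (u j)) - c * u i * cnj (u j) + c * c * u i * cnj (u j) * complex_of_real s"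
    using i j by (simp only: delta_sum_l delta_sum_r flip: sum_distrib_left S)
  also have "\<dots> = (if i = j then 1 else 0) + u i * cnj (u j) * (c * c * complex_of_real s - 2 * c)"
    by (simp add: algebra_simps)
  also have "\<dots> = (if i = j then 1 else 0)"
    using cs by simp
  finally show "(hh n u * hh n u) $$ (i,j) = 1\<^sub>m n $$ (i,j)" using i j by simp
qed auto


lemma hh_col_k: fixes v :: "nat \<Rightarrow> complex"
  assumes k: "k < n" and i: "i < n" and norm1: "(\<Sum>j<n. (cmod (v j))^2) = 1"
    and vk: "v k = complex_of_real r"
  shows "hh n (\<lambda>j. (if j = k then 1 else 0) - v j) $$ (i,k) = v i"
proof -
  define u where "u = (\<lambda>j. (if j = k then 1 else 0) - v j)"
  define s where "s = (\<Sum>l<n. (cmod (u l))^2)"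
  have uk: "u k = complex_of_real (1 - r)" unfolding u_def using vk by simp
  have tm: "(cmod (u l))^2 = (cmod (v l))^2 + (if l = k then 1 - 2*r else 0)" for l
  proof (cases "l = k")
    case True
    have "(cmod (u l))^2 = (1 - r)^2" using True uk by (simp only: norm_of_real power2_abs)
    also have "\<dots> = r^2 + (1 - 2 * r)" by (simp add: power2_eq_square algebra_simps)
    also have "r^2 = (cmod (v l))^2" using True vk by (simp only: norm_of_real power2_abs)
    finally show ?thesis using True by simp
  next
    case False
    then show ?thesis unfolding u_def by simp
  qed
  have s2: "s = 2 - 2 * r"
  proof -
    have "s = (\<Sum>l<n. (cmod (v l))^2) + (\<Sum>l<n. (if l = k then 1 - 2*r else 0))"
      unfolding s_def tm by (rule sum.distrib)
    also have "\<dots> = 2 - 2 * r" using norm1 k by simp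
    finally show ?thesis .
  qed
  have "hh n u $$ (i,k) = (if i = k then 1 else 0) - complex_of_real (2 / s) * u i * cnj (u k)"
    unfolding hh_def s_def using i k by simp
  also have "\<dots> = (if i = k then 1 else 0) - u i"
  proof (cases "s = 0")
    case True
    have "\<forall>l\<in>{..<n}. (cmod (u l))^2 = 0"
      using True unfolding s_def by (subst sum_nonneg_eq_0_iff[symmetric]) auto
    then have "u i = 0" using i by auto
    then show ?thesis by simp
  next
    case False
    then have r1: "1 - r \<noteq> 0" using s2 by simp
    have "complex_of_real (2 / s) * cnj (u k) = complex_of_real (2 / (2 - 2 * r) * (1 - r))"
      unfolding uk s2 by simp
    also have "2 / (2 - 2 * r) * (1 - r) = 1" using r1 by (simp add: field_simps)
    finally have "complex_of_real (2 / s) * cnj (u k) = 1" by simp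
    then show ?thesis by (metis mult.assoc mult.commute mult.right_neutral)
  qed
  also have "\<dots> = v i" unfolding u_def by simp
  finally show ?thesis unfolding u_def .
qed

lemma hh_col_small: assumes "j < k" "i < n" "j < n" "\<And>l. l < k \<Longrightarrow> u l = 0"
  shows "hh n u $$ (i,j) = (if i = j then 1 else 0)"
  using assms unfolding hh_def by simp


lemma mult_carrier_sq: "A \<in> carrier_mat n n \<Longrightarrow> B \<in> carrier_mat n n \<Longrightarrow> A * B \<in> carrier_mat n n"
  by simp

definition diag_upto :: "cmat \<Rightarrow> nat \<Rightarrow> nat \<Rightarrow> bool" where
  "diag_upto B n k \<longleftrightarrow> (\<forall>i<k. \<forall>j<n. j \<noteq> i \<longrightarrow> B $$ (j,i) = 0)"

lemma mat_vec_unit: assumes "(H::cmat) \<in> carrier_mat n n" "i < n" shows "H *\<^sub>v unit_vec n i = col H i"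
proof -
  have "col (H * 1\<^sub>m n) i = H *\<^sub>v col (1\<^sub>m n) i" using assms by (intro col_mult2) auto
  then show ?thesis using assms by simp
qed

lemma herm_entry: assumes "mat_adjoint (B::cmat) = B" "B \<in> carrier_mat n n" "i < n" "j < n"
  shows "B $$ (i,j) = cnj (B $$ (j,i))"
proof -
  have "B $$ (i,j) = mat_adjoint B $$ (i,j)" using assms(1) by simp
  also have "\<dots> = cnj (B $$ (j,i))" by (rule adj_index) (use assms in auto)
  finally show ?thesis .
qed

lemma eig_in_block: fixes B :: cmat
  assumes Bc: "B \<in> carrier_mat n n" and Bh: "mat_adjoint B = B" and D: "diag_upto B n k" and k: "k < n"
  shows "\<exists>lam v. (\<forall>j<k. v j = 0) \<and> (\<Sum>j<n. (cmod (v j))^2) = 1 \<and> Im (v k) = 0 \<and>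
     (\<forall>i<n. (\<Sum>j<n. B $$ (i,j) * v j) = lam * v i)"
proof -
  define m where "m = n - k"
  have m0: "m > 0" using k m_def by simp
  define C where "C = mat m m (\<lambda>(i,j). B $$ (k+i, k+j))"
  have C: "C \<in> carrier_mat m m" unfolding C_def by simp
  from spectrum_non_empty[OF C m0] obtain lam where "lam \<in> spectrum C" by auto
  then obtain w where w: "eigenvector C w lam" unfolding spectrum_def eigenvalue_def by auto
  then have wc: "w \<in> carrier_vec m" and wnz: "w \<noteq> 0\<^sub>v m" and Cw: "C *\<^sub>v w = lam \<cdot>\<^sub>v w"
    unfolding eigenvector_def using C by auto
  define v0 where "v0 = (\<lambda>j. if j < k then 0 else w $ (j - k))"
  have eig0: "(\<Sum>j<n. B $$ (i,j) * v0 j) = lam * v0 i" if i: "i < n" for i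
  proof -
    have "(\<Sum>j<n. B $$ (i,j) * v0 j) = (\<Sum>j<k. B $$ (i,j) * v0 j) + (\<Sum>t<m. B $$ (i,k+t) * v0 (k+t))"
      unfolding m_def using k by (rule sum_split_at[OF less_imp_le])
    also have "(\<Sum>j<k. B $$ (i,j) * v0 j) = 0" unfolding v0_def by simp
    also have "(\<Sum>t<m. B $$ (i,k+t) * v0 (k+t)) = (\<Sum>t<m. B $$ (i,k+t) * w $ t)"
      unfolding v0_def by simp
    finally have e: "(\<Sum>j<n. B $$ (i,j) * v0 j) = (\<Sum>t<m. B $$ (i,k+t) * w $ t)" by simp
    show ?thesis
    proof (cases "i < k")
      case True
      have "B $$ (i,k+t) = 0" if t: "t < m" for t
      proof -
        have kt: "k + t < n" using t m_def by simp
        have "B $$ (i,k+t) = cnj (B $$ (k+t,i))" by (rule herm_entry[OF Bh Bc i kt])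
        also have "B $$ (k+t,i) = 0" using D True kt unfolding diag_upto_def by auto
        finally show ?thesis by simp
      qed
      then have "(\<Sum>t<m. B $$ (i,k+t) * w $ t) = 0" by simp
      then show ?thesis using e True unfolding v0_def by simp
    next
      case False
      define i' where "i' = i - k"
      have i': "i' < m" "k + i' = i" using False i unfolding i'_def m_def by auto
      have "(C *\<^sub>v w) $ i' = (\<Sum>t<m. B $$ (i,k+t) * w $ t)"
        using i' C wc unfolding C_def by (simp add: scalar_prod_def atLeast0LessThan)
      also have "(C *\<^sub>v w) $ i' = lam * w $ i'" using Cw i' wc by simp
      finally show ?thesis using e False unfolding v0_def i'_def by simp
    qed
  qed
  obtain t where t: "t < m" "w $ t \<noteq> 0"
  proof -
    have "\<exists>t<m. w $ t \<noteq> 0"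
    proof (rule ccontr)
      assume "\<not> (\<exists>t<m. w $ t \<noteq> 0)"
      then have "w = 0\<^sub>v m" using wc by (intro eq_vecI) auto
      then show False using wnz by simp
    qed
    then show ?thesis using that by blast
  qed
  define N2 where "N2 = (\<Sum>j<n. (cmod (v0 j))^2)"
  have N2: "N2 > 0"
  proof -
    have kt: "k + t \<in> {..<n}" using t m_def by auto
    have "(cmod (v0 (k+t)))^2 \<le> N2" unfolding N2_def
      by (rule member_le_sum[OF kt]) auto
    moreover have "(cmod (v0 (k+t)))^2 > 0" using t unfolding v0_def by simp
    ultimately show ?thesis by linarith
  qed
  define z where "z = v0 k"
  define \<alpha> where "\<alpha> = (if z = 0 then 1 else cnj z / complex_of_real (cmod z)) / complex_of_real (sqrt N2)"
  have ca: "cmod \<alpha> = 1 / sqrt N2"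
    unfolding \<alpha>_def using N2 by (simp add: norm_divide)
  define v where "v = (\<lambda>j. \<alpha> * v0 j)"
  have "(\<forall>j<k. v j = 0)" unfolding v_def v0_def by simp
  moreover have "(\<Sum>j<n. (cmod (v j))^2) = 1"
  proof -
    have "(\<Sum>j<n. (cmod (v j))^2) = (\<Sum>j<n. (1 / N2) * (cmod (v0 j))^2)"
      unfolding v_def using N2 by (simp add: norm_mult power_mult_distrib ca power_divide)
    also have "\<dots> = 1" using N2 unfolding N2_def[symmetric] sum_distrib_left[symmetric] by simp
    finally show ?thesis .
  qed
  moreover have "Im (v k) = 0"
  proof (cases "z = 0")
    case True then show ?thesis unfolding v_def z_def by simp
  next
    case False
    have "v k = cnj z * z / (complex_of_real (cmod z) * complex_of_real (sqrt N2))"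
      unfolding v_def \<alpha>_def z_def[symmetric] using False by simp
    also have "\<dots> = complex_of_real ((cmod z)^2 / (cmod z * sqrt N2))"
      unfolding cnj_mult_self by simp
    finally show ?thesis by simp
  qed
  moreover have "\<forall>i<n. (\<Sum>j<n. B $$ (i,j) * v j) = lam * v i"
  proof (intro allI impI)
    fix i assume i: "i < n"
    have "(\<Sum>j<n. B $$ (i,j) * v j) = \<alpha> * (\<Sum>j<n. B $$ (i,j) * v0 j)"
      unfolding v_def by (simp add: sum_distrib_left ac_simps)
    then show "(\<Sum>j<n. B $$ (i,j) * v j) = lam * v i" using eig0[OF i] unfolding v_def by simp
  qed
  ultimately show ?thesis by blast
qed


lemma diag_step: fixes A V :: cmat
  assumes A: "A \<in> carrier_mat n n" and Ah: "mat_adjoint A = A" and V: "V \<in> carrier_mat n n"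
    and VV: "mat_adjoint V * V = 1\<^sub>m n" and VV': "V * mat_adjoint V = 1\<^sub>m n"
    and D: "diag_upto (mat_adjoint V * A * V) n k" and k: "k < n"
  shows "\<exists>V'. V' \<in> carrier_mat n n \<and> mat_adjoint V' * V' = 1\<^sub>m n \<and> V' * mat_adjoint V' = 1\<^sub>m n
     \<and> diag_upto (mat_adjoint V' * A * V') n (Suc k)"
proof -
  define B where "B = mat_adjoint V * A * V"
  have Va: "mat_adjoint V \<in> carrier_mat n n" using V by simp
  have Bc: "B \<in> carrier_mat n n" unfolding B_def by (rule mult_carrier_mat[OF mult_carrier_mat[OF Va A] V])
  have Bh: "mat_adjoint B = B"
  proof -
    have "mat_adjoint B = mat_adjoint V * mat_adjoint (mat_adjoint V * A)"
      unfolding B_def using A V Va by (subst adj_mult[of _ n n _ n]) auto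
    also have "\<dots> = mat_adjoint V * (A * V)"
      using A V Va Ah by (subst adj_mult[of _ n n _ n]) auto
    also have "\<dots> = B" unfolding B_def using A V Va by (simp add: assoc_mult_mat[of _ n n _ n _ n])
    finally show ?thesis .
  qed
  from eig_in_block[OF Bc Bh D[folded B_def] k] obtain lam v where
    v0: "\<forall>j<k. v j = 0" and vn: "(\<Sum>j<n. (cmod (v j))^2) = 1" and vk: "Im (v k) = 0"
    and ve: "\<forall>i<n. (\<Sum>j<n. B $$ (i,j) * v j) = lam * v i" by blast
  define u where "u = (\<lambda>j. (if j = k then 1 else 0) - v j)"
  define H where "H = hh n u"
  have Hc: "H \<in> carrier_mat n n" unfolding H_def by simp
  have Hh: "mat_adjoint H = H" unfolding H_def by (rule hh_adj)
  have HH: "H * H = 1\<^sub>m n" unfolding H_def by (rule hh_sq)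
  have ul: "\<And>l. l < k \<Longrightarrow> u l = 0" unfolding u_def using v0 by simp
  have vkr: "v k = complex_of_real (Re (v k))" using vk by (simp add: complex_eq_iff)
  have Hk: "col H k = vec n v"
  proof (rule eq_vecI)
    fix i assume "i < dim_vec (vec n v)"
    then have i: "i < n" by simp
    show "col H k $ i = vec n v $ i"
      using hh_col_k[OF k i vn vkr] i k Hc unfolding H_def u_def by simp
  qed (use Hc in simp)
  have Hi: "col H i = unit_vec n i" if i: "i < k" for i
  proof (rule eq_vecI)
    fix j assume "j < dim_vec (unit_vec n i)"
    then have j: "j < n" by simp
    show "col H i $ j = unit_vec n i $ j"
      using hh_col_small[OF i j _ ul] i j k Hc unfolding H_def by simp
  qed (use Hc in simp)
  define V' where "V' = V * H"
  have V'c: "V' \<in> carrier_mat n n" unfolding V'_def using V Hc by simp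
  have aV': "mat_adjoint V' = H * mat_adjoint V"
    unfolding V'_def using V Hc Hh by (simp add: adj_mult[of _ n n _ n])
  have u1: "mat_adjoint V' * V' = 1\<^sub>m n"
  proof -
    have "mat_adjoint V' * V' = (H * mat_adjoint V) * (V * H)" using aV' V'_def by simp
    also have "\<dots> = H * (mat_adjoint V * V) * H"
      using V Va Hc by (simp add: assoc_mult_mat[of _ n n _ n _ n] mult_carrier_sq)
    finally show ?thesis using VV HH Hc by simp
  qed
  have u2: "V' * mat_adjoint V' = 1\<^sub>m n"
  proof -
    have "V' * mat_adjoint V' = (V * H) * (H * mat_adjoint V)" using aV' V'_def by simp
    also have "\<dots> = V * (H * H) * mat_adjoint V"
      using V Va Hc by (simp add: assoc_mult_mat[of _ n n _ n _ n] mult_carrier_sq)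
    finally show ?thesis using VV' HH V by simp
  qed
  have B': "mat_adjoint V' * A * V' = H * B * H"
  proof -
    have "mat_adjoint V' * A * V' = (H * mat_adjoint V) * A * (V * H)" using aV' V'_def by simp
    also have "\<dots> = H * B * H"
      unfolding B_def using V Va Hc A by (simp add: assoc_mult_mat[of _ n n _ n _ n] mult_carrier_sq)
    finally show ?thesis .
  qed
  have colB': "col (H * B * H) i = H *\<^sub>v (B *\<^sub>v col H i)" if i: "i < n" for i
  proof -
    have "col (H * B * H) i = (H * B) *\<^sub>v col H i" using Hc Bc i by (intro col_mult2) auto
    also have "\<dots> = H *\<^sub>v (B *\<^sub>v col H i)" using Hc Bc i by (intro assoc_mult_mat_vec) auto
    finally show ?thesis .
  qed
  have "diag_upto (H * B * H) n (Suc k)"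
    unfolding diag_upto_def
  proof (intro allI impI)
    fix i j assume i: "i < Suc k" and j: "j < n" and ji: "j \<noteq> i"
    have i': "i < n" using i k by simp
    show "(H * B * H) $$ (j,i) = 0"
    proof (cases "i < k")
      case True
      have "B *\<^sub>v unit_vec n i = B $$ (i,i) \<cdot>\<^sub>v unit_vec n i"
      proof -
        have "B *\<^sub>v unit_vec n i = col B i" by (rule mat_vec_unit[OF Bc i'])
        also have "\<dots> = B $$ (i,i) \<cdot>\<^sub>v unit_vec n i"
          using D True i' Bc unfolding B_def[symmetric] diag_upto_def by (intro eq_vecI) auto
        finally show ?thesis .
      qed
      then have "col (H * B * H) i = B $$ (i,i) \<cdot>\<^sub>v unit_vec n i"
        using colB'[OF i'] Hi[OF True] mult_mat_vec[OF Hc, of "unit_vec n i"] mat_vec_unit[OF Hc i'] Hi[OF True]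
        by simp
      then have "col (H * B * H) i $ j = 0" using j ji i' by simp
      then show ?thesis using j i' Hc Bc by simp
    next
      case False
      then have ik: "i = k" using i by simp
      have "B *\<^sub>v vec n v = lam \<cdot>\<^sub>v vec n v"
      proof (rule eq_vecI)
        fix l assume "l < dim_vec (lam \<cdot>\<^sub>v vec n v)"
        then have l: "l < n" by simp
        have "(B *\<^sub>v vec n v) $ l = (\<Sum>j<n. B $$ (l,j) * v j)"
          using l Bc by (simp add: scalar_prod_def atLeast0LessThan)
        then show "(B *\<^sub>v vec n v) $ l = (lam \<cdot>\<^sub>v vec n v) $ l" using ve l by simp
      qed (use Bc in simp)
      then have "col (H * B * H) k = lam \<cdot>\<^sub>v (H *\<^sub>v col H k)"
        using colB'[OF k] Hk mult_mat_vec[OF Hc, of "vec n v" lam] by simp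
      also have "H *\<^sub>v col H k = col (H * H) k" using Hc k by (intro col_mult2[symmetric]) auto
      also have "\<dots> = unit_vec n k" using HH k by simp
      finally have "col (H * B * H) k $ j = 0" using j ji ik k by simp
      then show ?thesis using j k Hc Bc ik by simp
    qed
  qed
  then show ?thesis using V'c u1 u2 B' by metis
qed

lemma diag_upto_exists: fixes A :: cmat
  assumes A: "A \<in> carrier_mat n n" and Ah: "mat_adjoint A = A"
  shows "k \<le> n \<Longrightarrow> \<exists>V. V \<in> carrier_mat n n \<and> mat_adjoint V * V = 1\<^sub>m n \<and> V * mat_adjoint V = 1\<^sub>m n
     \<and> diag_upto (mat_adjoint V * A * V) n k"
proof (induction k)
  case 0
  show ?case by (rule exI[of _ "1\<^sub>m n"]) (auto simp: diag_upto_def)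
next
  case (Suc k)
  then obtain V where "V \<in> carrier_mat n n" "mat_adjoint V * V = 1\<^sub>m n" "V * mat_adjoint V = 1\<^sub>m n"
     "diag_upto (mat_adjoint V * A * V) n k" by auto
  from diag_step[OF A Ah this] Suc.prems show ?case by simp
qed

lemma spectral: fixes A :: cmat
  assumes A: "A \<in> carrier_mat n n" and Ah: "mat_adjoint A = A"
  shows "\<exists>V d. V \<in> carrier_mat n n \<and> mat_adjoint V * V = 1\<^sub>m n \<and> V * mat_adjoint V = 1\<^sub>m n
     \<and> A = V * dm n (\<lambda>i. complex_of_real (d i)) * mat_adjoint V"
proof -
  obtain V where V: "V \<in> carrier_mat n n" and VV: "mat_adjoint V * V = 1\<^sub>m n" and VV': "V * mat_adjoint V = 1\<^sub>m n"
     and D: "diag_upto (mat_adjoint V * A * V) n n" using diag_upto_exists[OF A Ah, of n] by auto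
  define B where "B = mat_adjoint V * A * V"
  have Va: "mat_adjoint V \<in> carrier_mat n n" using V by simp
  have Bc: "B \<in> carrier_mat n n" unfolding B_def by (rule mult_carrier_mat[OF mult_carrier_mat[OF Va A] V])
  have Bh: "mat_adjoint B = B"
  proof -
    have "mat_adjoint B = mat_adjoint V * mat_adjoint (mat_adjoint V * A)"
      unfolding B_def using A V Va by (subst adj_mult[of _ n n _ n]) auto
    also have "\<dots> = mat_adjoint V * (A * V)"
      using A V Va Ah by (subst adj_mult[of _ n n _ n]) auto
    also have "\<dots> = B" unfolding B_def using A V Va by (simp add: assoc_mult_mat[of _ n n _ n _ n])
    finally show ?thesis .
  qed
  define d where "d = (\<lambda>i. Re (B $$ (i,i)))"
  have Bd: "B = dm n (\<lambda>i. complex_of_real (d i))"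
  proof (rule eq_matI)
    fix i j assume "i < dim_row (dm n (\<lambda>i. complex_of_real (d i)))" "j < dim_col (dm n (\<lambda>i. complex_of_real (d i)))"
    then have i: "i < n" and j: "j < n" by auto
    show "B $$ (i,j) = dm n (\<lambda>i. complex_of_real (d i)) $$ (i,j)"
    proof (cases "i = j")
      case True
      have "B $$ (i,i) = cnj (B $$ (i,i))" by (rule herm_entry[OF Bh Bc i i])
      then have "Im (B $$ (i,i)) = 0" by (metis cnj.simps(2) neg_equal_zero)
      then show ?thesis using True i unfolding d_def by (simp add: complex_eq_iff)
    next
      case False
      then show ?thesis using D i j unfolding B_def[symmetric] diag_upto_def by simp
    qed
  qed (use Bc in auto)
  have "V * B * mat_adjoint V = (V * mat_adjoint V) * A * (V * mat_adjoint V)"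
    unfolding B_def using A V Va by (simp add: assoc_mult_mat[of _ n n _ n _ n] mult_carrier_sq)
  then have "A = V * B * mat_adjoint V" using VV' A by simp
  then show ?thesis using V VV VV' Bd by blast
qed

lemma conj_diag_smult: fixes V :: cmat assumes V: "V \<in> carrier_mat n n"
  shows "c \<cdot>\<^sub>m (V * dm n d * mat_adjoint V) = V * dm n (\<lambda>i. c * d i) * mat_adjoint V"
proof (rule eq_matI)
  fix i j assume "i < dim_row (V * dm n (\<lambda>i. c * d i) * mat_adjoint V)" "j < dim_col (V * dm n (\<lambda>i. c * d i) * mat_adjoint V)"
  then have i: "i < n" and j: "j < n" using V by auto
  have "(c \<cdot>\<^sub>m (V * dm n d * mat_adjoint V)) $$ (i,j) = c * (V * dm n d * mat_adjoint V) $$ (i,j)"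
    using i j V by simp
  then show "(c \<cdot>\<^sub>m (V * dm n d * mat_adjoint V)) $$ (i,j) = (V * dm n (\<lambda>i. c * d i) * mat_adjoint V) $$ (i,j)"
    unfolding conj_diag_index[OF V i j] by (simp add: sum_distrib_left ac_simps)
qed (use V in auto)

lemma conj_diag_add: fixes V :: cmat assumes V: "V \<in> carrier_mat n n"
  shows "V * dm n a * mat_adjoint V + V * dm n b * mat_adjoint V = V * dm n (\<lambda>i. a i + b i) * mat_adjoint V"
proof (rule eq_matI)
  fix i j assume "i < dim_row (V * dm n (\<lambda>i. a i + b i) * mat_adjoint V)" "j < dim_col (V * dm n (\<lambda>i. a i + b i) * mat_adjoint V)"
  then have i: "i < n" and j: "j < n" using V by auto
  have "(V * dm n a * mat_adjoint V + V * dm n b * mat_adjoint V) $$ (i,j) = (V * dm n a * mat_adjoint V) $$ (i,j) + (V * dm n b * mat_adjoint V) $$ (i,j)"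
    using i j V by simp
  then show "(V * dm n a * mat_adjoint V + V * dm n b * mat_adjoint V) $$ (i,j) = (V * dm n (\<lambda>i. a i + b i) * mat_adjoint V) $$ (i,j)"
    unfolding conj_diag_index[OF V i j] sum.distrib[symmetric]
  proof -
    assume h: "(V * dm n a * mat_adjoint V + V * dm n b * mat_adjoint V) $$ (i, j) =
      (\<Sum>x<n. V $$ (i, x) * a x * cnj (V $$ (j, x)) + V $$ (i, x) * b x * cnj (V $$ (j, x)))"
    have "(\<Sum>x<n. V $$ (i, x) * a x * cnj (V $$ (j, x)) + V $$ (i, x) * b x * cnj (V $$ (j, x)))
       = (\<Sum>x<n. V $$ (i, x) * (a x + b x) * cnj (V $$ (j, x)))"
      by (rule sum.cong) (simp_all add: algebra_simps)
    then show "(V * dm n a * mat_adjoint V + V * dm n b * mat_adjoint V) $$ (i, j) =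
      (\<Sum>x<n. V $$ (i, x) * (a x + b x) * cnj (V $$ (j, x)))" using h by simp
  qed
qed (use V in auto)

lemma kron_dm: "kron (dm a e1) (dm b e2) = dm (a*b) (\<lambda>i. e1 (i div b) * e2 (i mod b))"
proof (rule eq_matI)
  fix i j assume "i < dim_row (dm (a*b) (\<lambda>i. e1 (i div b) * e2 (i mod b)))" "j < dim_col (dm (a*b) (\<lambda>i. e1 (i div b) * e2 (i mod b)))"
  then have i: "i < a*b" and j: "j < a*b" by auto
  have "i = j \<longleftrightarrow> i div b = j div b \<and> i mod b = j mod b"
    by (metis div_mult_mod_eq)
  then show "kron (dm a e1) (dm b e2) $$ (i, j) = dm (a*b) (\<lambda>i. e1 (i div b) * e2 (i mod b)) $$ (i,j)"
    using i j div_mod_lt[OF i] div_mod_lt[OF j] by auto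
qed auto

lemma kron_conj: fixes V1 V2 :: cmat assumes V1: "V1 \<in> carrier_mat a a" and V2: "V2 \<in> carrier_mat b b"
  shows "kron (V1 * dm a e1 * mat_adjoint V1) (V2 * dm b e2 * mat_adjoint V2)
    = kron V1 V2 * dm (a*b) (\<lambda>i. e1 (i div b) * e2 (i mod b)) * mat_adjoint (kron V1 V2)"
proof -
  have "kron (V1 * dm a e1 * mat_adjoint V1) (V2 * dm b e2 * mat_adjoint V2)
      = kron (V1 * dm a e1) (V2 * dm b e2) * kron (mat_adjoint V1) (mat_adjoint V2)"
    using V1 V2 by (intro kron_mult[symmetric]) auto
  also have "kron (V1 * dm a e1) (V2 * dm b e2) = kron V1 V2 * kron (dm a e1) (dm b e2)"
    using V1 V2 by (intro kron_mult[symmetric]) auto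
  finally show ?thesis by (simp add: kron_dm kron_adj)
qed

lemma kron_unitary: fixes V1 V2 :: cmat assumes V1: "V1 \<in> carrier_mat a a" and V2: "V2 \<in> carrier_mat b b"
  and u1: "mat_adjoint V1 * V1 = 1\<^sub>m a" "V1 * mat_adjoint V1 = 1\<^sub>m a"
  and u2: "mat_adjoint V2 * V2 = 1\<^sub>m b" "V2 * mat_adjoint V2 = 1\<^sub>m b"
  shows "mat_adjoint (kron V1 V2) * kron V1 V2 = 1\<^sub>m (a*b)" "kron V1 V2 * mat_adjoint (kron V1 V2) = 1\<^sub>m (a*b)"
proof -
  have "kron (mat_adjoint V1) (mat_adjoint V2) * kron V1 V2 = kron (mat_adjoint V1 * V1) (mat_adjoint V2 * V2)"
    by (rule kron_mult) (use V1 V2 in auto)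
  then show "mat_adjoint (kron V1 V2) * kron V1 V2 = 1\<^sub>m (a*b)"
    unfolding kron_adj u1 u2 kron_one .
  have "kron V1 V2 * kron (mat_adjoint V1) (mat_adjoint V2) = kron (V1 * mat_adjoint V1) (V2 * mat_adjoint V2)"
    by (rule kron_mult) (use V1 V2 in auto)
  then show "kron V1 V2 * mat_adjoint (kron V1 V2) = 1\<^sub>m (a*b)"
    unfolding kron_adj u1 u2 kron_one .
qed

lemma mtrace_smult: "M \<in> carrier_mat n n \<Longrightarrow> mtrace (c \<cdot>\<^sub>m M) = c * mtrace M"
  unfolding mtrace_def by (auto simp: sum_distrib_left intro!: sum.cong)

lemma mexp_herm: fixes V :: cmat assumes V: "V \<in> carrier_mat n n" and VV: "mat_adjoint V * V = 1\<^sub>m n"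
  and VV': "V * mat_adjoint V = 1\<^sub>m n"
  shows "mexp (c \<cdot>\<^sub>m (V * dm n d * mat_adjoint V)) = V * dm n (\<lambda>i. exp (c * d i)) * mat_adjoint V"
  unfolding conj_diag_smult[OF V] by (rule mexp_conj_diag[OF V VV VV'])

lemma gibbs_diag: fixes V :: cmat and d :: "nat \<Rightarrow> real"
  assumes V: "V \<in> carrier_mat n n" and VV: "mat_adjoint V * V = 1\<^sub>m n"
  and VV': "V * mat_adjoint V = 1\<^sub>m n" and n: "n > 0"
  and H: "H = V * dm n (\<lambda>i. complex_of_real (d i)) * mat_adjoint V"
  shows "gibbs \<beta> H = V * dm n (\<lambda>i. complex_of_real (exp (- \<beta> * d i) / (\<Sum>j<n. exp (- \<beta> * d j)))) * mat_adjoint V"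
    "mtrace (gibbs \<beta> H) = 1" "(\<Sum>j<n. exp (- \<beta> * d j)) > 0"
proof -
  define Z where "Z = (\<Sum>j<n. exp (- \<beta> * d j))"
  have Z: "Z > 0" unfolding Z_def using n by (intro sum_pos) auto
  then show "(\<Sum>j<n. exp (- \<beta> * d j)) > 0" unfolding Z_def .
  have E: "mexp ((- complex_of_real \<beta>) \<cdot>\<^sub>m H) = V * dm n (\<lambda>i. complex_of_real (exp (- \<beta> * d i))) * mat_adjoint V"
  proof -
    have "(\<lambda>i. exp ((- complex_of_real \<beta>) * complex_of_real (d i))) = (\<lambda>i. complex_of_real (exp (- \<beta> * d i)))"
      by (rule ext) (metis exp_of_real of_real_minus of_real_mult)
    then show ?thesis unfolding H mexp_herm[OF V VV VV'] by simp
  qed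
  have tE: "mtrace (mexp ((- complex_of_real \<beta>) \<cdot>\<^sub>m H)) = complex_of_real Z"
    unfolding E mtrace_conj_diag[OF V VV] Z_def by simp
  show g: "gibbs \<beta> H = V * dm n (\<lambda>i. complex_of_real (exp (- \<beta> * d i) / (\<Sum>j<n. exp (- \<beta> * d j)))) * mat_adjoint V"
    unfolding gibbs_def Let_def tE unfolding E conj_diag_smult[OF V] Z_def by simp
  have "mtrace (gibbs \<beta> H) = (\<Sum>i<n. complex_of_real (exp (- \<beta> * d i) / Z))"
    unfolding g mtrace_conj_diag[OF V VV] Z_def by simp
  also have "\<dots> = complex_of_real ((\<Sum>i<n. exp (- \<beta> * d i)) / Z)"
    by (simp add: sum_divide_distrib)
  also have "\<dots> = 1" using Z unfolding Z_def by simp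
  finally show "mtrace (gibbs \<beta> H) = 1" .
qed

lemma cancel_l: fixes V :: cmat assumes "V \<in> carrier_mat n n" "mat_adjoint V * V = 1\<^sub>m n" "dim_row X = n"
  shows "mat_adjoint V * (V * X) = X"
proof -
  have "X \<in> carrier_mat n (dim_col X)" by (rule carrier_matI) (use assms(3) in auto)
  then show ?thesis by (rule adj_cancel[OF assms(1,2)])
qed

lemma cancel_l': fixes V :: cmat assumes V: "V \<in> carrier_mat n n" and VV: "V * mat_adjoint V = 1\<^sub>m n" and X: "dim_row X = n"
  shows "V * (mat_adjoint V * X) = X"
proof -
  have Xc: "X \<in> carrier_mat n (dim_col X)" by (rule carrier_matI) (use X in auto)
  have "V * (mat_adjoint V * X) = (V * mat_adjoint V) * X"
    by (rule assoc_mult_mat[symmetric, OF V adj_carrier[OF V] Xc])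
  also have "\<dots> = 1\<^sub>m n * X" by (simp only: VV)
  also have "\<dots> = X" by (rule left_mult_one_mat[OF Xc])
  finally show ?thesis .
qed

lemma dm_mult_l: "R \<in> carrier_mat N m \<Longrightarrow> i < N \<Longrightarrow> j < m \<Longrightarrow> (dm N a * R) $$ (i,j) = a i * R $$ (i,j)"
proof -
  assume R: "R \<in> carrier_mat N m" and i: "i < N" and j: "j < m"
  have "(dm N a * R) $$ (i,j) = (\<Sum>l<N. (if i = l then a i else 0) * R $$ (l,j))"
    using R i j by (simp add: scalar_prod_def atLeast0LessThan)
  also have "\<dots> = (\<Sum>l<N. if i = l then a i * R $$ (i,j) else 0)" by (rule sum.cong) auto
  finally show ?thesis using i by simp
qed

lemma dm_mult_r: "R \<in> carrier_mat m N \<Longrightarrow> i < m \<Longrightarrow> j < N \<Longrightarrow> (R * dm N a) $$ (i,j) = R $$ (i,j) * a j"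
proof -
  assume R: "R \<in> carrier_mat m N" and i: "i < m" and j: "j < N"
  have "(R * dm N a) $$ (i,j) = (\<Sum>l<N. R $$ (i,l) * (if l = j then a l else 0))"
    using R i j by (simp add: scalar_prod_def atLeast0LessThan)
  also have "\<dots> = (\<Sum>l<N. if j = l then R $$ (i,j) * a j else 0)" by (rule sum.cong) auto
  finally show ?thesis using j by simp
qed

lemma intertwine1: fixes W Q :: cmat
  assumes W: "W \<in> carrier_mat N N" and WW: "mat_adjoint W * W = 1\<^sub>m N"
  and Q: "Q \<in> carrier_mat N N" and QQ: "mat_adjoint Q * Q = 1\<^sub>m N"
  and E: "W * dm N a * mat_adjoint W = Q * dm N b * mat_adjoint Q"
  shows "dm N a * (mat_adjoint W * Q) = (mat_adjoint W * Q) * dm N b"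
proof -
  have Wa: "mat_adjoint W \<in> carrier_mat N N" and Qa: "mat_adjoint Q \<in> carrier_mat N N" using W Q by auto
  have "dm N a * (mat_adjoint W * Q) = mat_adjoint W * ((W * dm N a * mat_adjoint W) * Q)"
    using W Q Wa by (simp add: assoc_mult_mat[of _ N N _ N _ N] mult_carrier_sq cancel_l[OF W WW])
  also have "\<dots> = mat_adjoint W * ((Q * dm N b * mat_adjoint Q) * Q)" unfolding E ..
  also have "\<dots> = (mat_adjoint W * Q) * dm N b"
    using W Q Wa Qa QQ by (simp add: assoc_mult_mat[of _ N N _ N _ N] mult_carrier_sq)
  finally show ?thesis .
qed

lemma intertwine2: fixes W Q :: cmat
  assumes W: "W \<in> carrier_mat N N" and WW': "W * mat_adjoint W = 1\<^sub>m N"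
  and Q: "Q \<in> carrier_mat N N" and QQ': "Q * mat_adjoint Q = 1\<^sub>m N"
  and E: "dm N a * (mat_adjoint W * Q) = (mat_adjoint W * Q) * dm N b"
  shows "W * dm N a * mat_adjoint W = Q * dm N b * mat_adjoint Q"
proof -
  have Wa: "mat_adjoint W \<in> carrier_mat N N" and Qa: "mat_adjoint Q \<in> carrier_mat N N" using W Q by auto
  have "Q * dm N b * mat_adjoint Q = W * ((mat_adjoint W * Q) * dm N b) * mat_adjoint Q"
    using W Q Wa Qa by (simp add: assoc_mult_mat[of _ N N _ N _ N] mult_carrier_sq cancel_l'[OF W WW'])
  also have "\<dots> = W * (dm N a * (mat_adjoint W * Q)) * mat_adjoint Q" unfolding E ..
  also have "\<dots> = W * dm N a * mat_adjoint W"
    using W Q Wa Qa QQ' by (simp add: assoc_mult_mat[of _ N N _ N _ N] mult_carrier_sq)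
  finally show ?thesis ..
qed

lemma dm_comm_transfer: fixes R :: cmat
  assumes R: "R \<in> carrier_mat N N" and E: "dm N a * R = R * dm N b"
  and imp: "\<And>i j. i < N \<Longrightarrow> j < N \<Longrightarrow> a i = b j \<Longrightarrow> a' i = b' j"
  shows "dm N a' * R = R * dm N b'"
proof (rule eq_matI)
  fix i j assume "i < dim_row (R * dm N b')" "j < dim_col (R * dm N b')"
  then have i: "i < N" and j: "j < N" using R by auto
  have "(dm N a * R) $$ (i,j) = (R * dm N b) $$ (i,j)" using E by simp
  then have "a i * R $$ (i,j) = R $$ (i,j) * b j" using dm_mult_l[OF R i j] dm_mult_r[OF R i j] by simp
  then have "R $$ (i,j) = 0 \<or> a i = b j" by (simp add: mult.commute)
  then have "a' i * R $$ (i,j) = R $$ (i,j) * b' j" using imp[OF i j] by (auto simp: mult.commute)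
  then show "(dm N a' * R) $$ (i,j) = (R * dm N b') $$ (i,j)" using dm_mult_l[OF R i j] dm_mult_r[OF R i j] by simp
qed (use R in auto)

lemma exp_inj: fixes W Q :: cmat and d g :: "nat \<Rightarrow> real"
  assumes W: "W \<in> carrier_mat N N" and WW: "mat_adjoint W * W = 1\<^sub>m N" and WW': "W * mat_adjoint W = 1\<^sub>m N"
  and Q: "Q \<in> carrier_mat N N" and QQ: "mat_adjoint Q * Q = 1\<^sub>m N" and QQ': "Q * mat_adjoint Q = 1\<^sub>m N"
  and z1: "z1 > 0" and z2: "z2 > 0" and \<beta>: "\<beta> > 0"
  and E: "W * dm N (\<lambda>i. complex_of_real (exp (- \<beta> * d i) / z1)) * mat_adjoint W
        = Q * dm N (\<lambda>i. complex_of_real (exp (- \<beta> * g i) / z2)) * mat_adjoint Q"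
  shows "\<exists>\<kappa>. Q * dm N (\<lambda>i. complex_of_real (g i)) * mat_adjoint Q
           = W * dm N (\<lambda>i. complex_of_real (d i + \<kappa>)) * mat_adjoint W"
proof -
  define \<kappa> where "\<kappa> = (ln z1 - ln z2) / \<beta>"
  have R: "mat_adjoint W * Q \<in> carrier_mat N N" using W Q by (simp add: mult_carrier_sq)
  note E1 = intertwine1[OF W WW Q QQ E]
  have imp: "complex_of_real (d i + \<kappa>) = complex_of_real (g j)"
    if h: "complex_of_real (exp (- \<beta> * d i) / z1) = complex_of_real (exp (- \<beta> * g j) / z2)" for i j
  proof -
    have "exp (- \<beta> * d i) / z1 = exp (- \<beta> * g j) / z2" using h by (simp only: of_real_eq_iff)
    then have "ln (exp (- \<beta> * d i) / z1) = ln (exp (- \<beta> * g j) / z2)" by simp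
    then have "- \<beta> * d i - ln z1 = - \<beta> * g j - ln z2" using z1 z2 by (simp add: ln_div)
    then have "d i + \<kappa> = g j" unfolding \<kappa>_def using \<beta> by (simp add: field_simps)
    then show ?thesis by simp
  qed
  have E2: "dm N (\<lambda>i. complex_of_real (d i + \<kappa>)) * (mat_adjoint W * Q) = (mat_adjoint W * Q) * dm N (\<lambda>i. complex_of_real (g i))"
    by (rule dm_comm_transfer[OF R E1]) (rule imp)
  show ?thesis using intertwine2[OF W WW' Q QQ' E2] by metis
qed

definition sgm :: "nat \<Rightarrow> nat \<Rightarrow> nat" where "sgm N i = (i mod N) * N + i div N"

definition sw :: "nat \<Rightarrow> cmat" where
  "sw N = mat (N*N) (N*N) (\<lambda>(i,j). if i = sgm N j then 1 else 0)"

lemma sgm_facts: assumes i: "i < N*N"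
  shows "sgm N i < N*N" "sgm N i div N = i mod N" "sgm N i mod N = i div N" "sgm N (sgm N i) = i"
proof -
  have d: "i div N < N" "i mod N < N" using div_mod_lt[OF i] by auto
  show "sgm N i < N*N" unfolding sgm_def using d by (simp add: idx_lt)
  show a: "sgm N i div N = i mod N" unfolding sgm_def using d by simp
  show b: "sgm N i mod N = i div N" unfolding sgm_def using d by simp
  show "sgm N (sgm N i) = i" unfolding sgm_def[of N "sgm N i"] a b by (simp add: mult.commute)
qed

lemma sgm_iff: "i < N*N \<Longrightarrow> k < N*N \<Longrightarrow> (i = sgm N k) = (k = sgm N i)"
  using sgm_facts(4) by metis

lemma sw_carrier[simp]: "sw N \<in> carrier_mat (N*N) (N*N)" "dim_row (sw N) = N*N" "dim_col (sw N) = N*N"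
  unfolding sw_def by auto

lemma sw_mult_l: assumes X: "X \<in> carrier_mat (N*N) m" and i: "i < N*N" and j: "j < m"
  shows "(sw N * X) $$ (i,j) = X $$ (sgm N i, j)"
proof -
  have "(sw N * X) $$ (i,j) = (\<Sum>k<N*N. (if i = sgm N k then 1 else 0) * X $$ (k,j))"
    using X i j by (simp add: scalar_prod_def atLeast0LessThan sw_def)
  also have "\<dots> = (\<Sum>k<N*N. if sgm N i = k then X $$ (sgm N i, j) else 0)"
    by (rule sum.cong) (use sgm_iff[OF i] in auto)
  finally show ?thesis using sgm_facts(1)[OF i] by simp
qed

lemma sw_mult_r: assumes X: "X \<in> carrier_mat m (N*N)" and i: "i < m" and j: "j < N*N"
  shows "(X * sw N) $$ (i,j) = X $$ (i, sgm N j)"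
proof -
  have "(X * sw N) $$ (i,j) = (\<Sum>k<N*N. X $$ (i,k) * (if k = sgm N j then 1 else 0))"
    using X i j by (simp add: scalar_prod_def atLeast0LessThan sw_def)
  also have "\<dots> = (\<Sum>k<N*N. if sgm N j = k then X $$ (i, sgm N j) else 0)"
    by (rule sum.cong) auto
  finally show ?thesis using sgm_facts(1)[OF j] by simp
qed

lemma sw_kron: assumes A: "A \<in> carrier_mat N N" and B: "B \<in> carrier_mat N N"
  shows "sw N * kron A B = kron B A * sw N"
proof (rule eq_matI)
  fix i j assume "i < dim_row (kron B A * sw N)" "j < dim_col (kron B A * sw N)"
  then have i: "i < N*N" and j: "j < N*N" using A B by auto
  have KA: "kron A B \<in> carrier_mat (N*N) (N*N)" "kron B A \<in> carrier_mat (N*N) (N*N)" using A B by auto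
  note si = sgm_facts[OF i] and sj = sgm_facts[OF j]
  have "(sw N * kron A B) $$ (i,j) = kron A B $$ (sgm N i, j)" by (rule sw_mult_l[OF KA(1) i j])
  also have "\<dots> = A $$ (i mod N, j div N) * B $$ (i div N, j mod N)" using si(1) j A B si by simp
  also have "\<dots> = kron B A $$ (i, sgm N j)" using sj(1) i A B sj by simp
  also have "\<dots> = (kron B A * sw N) $$ (i,j)" by (rule sw_mult_r[OF KA(2) i j, symmetric])
  finally show "(sw N * kron A B) $$ (i,j) = (kron B A * sw N) $$ (i,j)" .
qed (use A B in auto)

lemma sw_adj: "mat_adjoint (sw N) = sw N"
proof (rule eq_matI)
  fix i j assume "i < dim_row (sw N)" "j < dim_col (sw N)"
  then have i: "i < N*N" and j: "j < N*N" by auto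
  show "mat_adjoint (sw N) $$ (i,j) = sw N $$ (i,j)" using i j sgm_iff[OF i j] unfolding sw_def by auto
qed auto

lemma sw_sq: "sw N * sw N = 1\<^sub>m (N*N)"
proof (rule eq_matI)
  fix i j assume "i < dim_row (1\<^sub>m (N*N) :: cmat)" "j < dim_col (1\<^sub>m (N*N) :: cmat)"
  then have i: "i < N*N" and j: "j < N*N" by auto
  have "(sw N * sw N) $$ (i,j) = sw N $$ (sgm N i, j)" by (rule sw_mult_l[OF sw_carrier(1) i j])
  also have "\<dots> = (if sgm N i = sgm N j then 1 else 0)" using sgm_facts(1)[OF i] j unfolding sw_def by simp
  also have "\<dots> = (if i = j then 1 else 0)" using sgm_facts(4)[OF i] sgm_facts(4)[OF j] by metis
  finally show "(sw N * sw N) $$ (i,j) = 1\<^sub>m (N*N) $$ (i,j)" using i j by simp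
qed auto


definition Wm :: "nat \<Rightarrow> cmat \<Rightarrow> cmat" where
  "Wm N U = kron (mat_adjoint U) U * sw N"

context
  fixes N :: nat and U :: cmat
  assumes U: "U \<in> carrier_mat N N" and UU: "mat_adjoint U * U = 1\<^sub>m N" and UU': "U * mat_adjoint U = 1\<^sub>m N"
begin

lemma Ua: "mat_adjoint U \<in> carrier_mat N N" using U by simp

lemma Wm_carrier: "Wm N U \<in> carrier_mat (N*N) (N*N)"
  unfolding Wm_def using U Ua by (intro mult_carrier_mat[of _ _ "N*N"]) auto

lemma Wm_adj: "mat_adjoint (Wm N U) = sw N * kron U (mat_adjoint U)"
  unfolding Wm_def using U Ua by (simp add: adj_mult[of _ "N*N" "N*N" _ "N*N"] sw_adj kron_adj)

lemma K1: "kron (mat_adjoint U) U \<in> carrier_mat (N*N) (N*N)" "kron U (mat_adjoint U) \<in> carrier_mat (N*N) (N*N)"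
  using U Ua by auto

lemma Wm_unitary: "mat_adjoint (Wm N U) * Wm N U = 1\<^sub>m (N*N)" "Wm N U * mat_adjoint (Wm N U) = 1\<^sub>m (N*N)"
proof -
  have kk: "kron U (mat_adjoint U) * kron (mat_adjoint U) U = 1\<^sub>m (N*N)"
    using kron_mult[OF U Ua Ua U] UU UU' kron_one by simp
  have kk': "kron (mat_adjoint U) U * kron U (mat_adjoint U) = 1\<^sub>m (N*N)"
    using kron_mult[OF Ua U U Ua] UU UU' kron_one by simp
  have S: "sw N \<in> carrier_mat (N*N) (N*N)" by simp
  have "mat_adjoint (Wm N U) * Wm N U = sw N * (kron U (mat_adjoint U) * kron (mat_adjoint U) U) * sw N"
    unfolding Wm_adj unfolding Wm_def using K1 S by (simp add: assoc_mult_mat[of _ "N*N" "N*N" _ "N*N" _ "N*N"] mult_carrier_sq)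
  then show "mat_adjoint (Wm N U) * Wm N U = 1\<^sub>m (N*N)" using kk sw_sq by simp
  have "Wm N U * mat_adjoint (Wm N U) = kron (mat_adjoint U) U * (sw N * sw N) * kron U (mat_adjoint U)"
    unfolding Wm_adj unfolding Wm_def using K1 S by (simp add: assoc_mult_mat[of _ "N*N" "N*N" _ "N*N" _ "N*N"] mult_carrier_sq)
  then show "Wm N U * mat_adjoint (Wm N U) = 1\<^sub>m (N*N)" using kk' sw_sq right_mult_one_mat[OF K1(1)] by simp
qed

lemma Wm_state: assumes \<rho>: "\<rho> \<in> carrier_mat N N" and g: "\<gamma> \<in> carrier_mat N N"
  shows "Wm N U * kron \<rho> \<gamma> * mat_adjoint (Wm N U) = kron (mat_adjoint U * \<gamma> * U) (U * \<rho> * mat_adjoint U)"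
proof -
  have S: "sw N \<in> carrier_mat (N*N) (N*N)" by simp
  have Kr: "kron \<rho> \<gamma> \<in> carrier_mat (N*N) (N*N)" "kron \<gamma> \<rho> \<in> carrier_mat (N*N) (N*N)" using \<rho> g by auto
  have "Wm N U * kron \<rho> \<gamma> * mat_adjoint (Wm N U) = kron (mat_adjoint U) U * ((sw N * kron \<rho> \<gamma>) * sw N) * kron U (mat_adjoint U)"
    unfolding Wm_adj unfolding Wm_def using K1 S Kr by (simp add: assoc_mult_mat[of _ "N*N" "N*N" _ "N*N" _ "N*N"] mult_carrier_sq)
  also have "(sw N * kron \<rho> \<gamma>) * sw N = kron \<gamma> \<rho>"
    unfolding sw_kron[OF \<rho> g] using Kr S right_mult_one_mat[OF Kr(2)] by (simp add: assoc_mult_mat[of _ "N*N" "N*N" _ "N*N" _ "N*N"] sw_sq)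
  also have "kron (mat_adjoint U) U * kron \<gamma> \<rho> = kron (mat_adjoint U * \<gamma>) (U * \<rho>)"
    by (rule kron_mult[OF Ua U g \<rho>])
  also have "\<dots> * kron U (mat_adjoint U) = kron (mat_adjoint U * \<gamma> * U) (U * \<rho> * mat_adjoint U)"
    using Ua U g \<rho> by (intro kron_mult) auto
  finally show ?thesis .
qed

lemma Wm_comm: assumes H1: "H1 \<in> carrier_mat N N" and H2: "H2 \<in> carrier_mat N N"
  and E: "H2 = U * H1 * mat_adjoint U + \<kappa> \<cdot>\<^sub>m 1\<^sub>m N"
  shows "Wm N U * (kron H1 (1\<^sub>m N) + kron (1\<^sub>m N) H2) = (kron H1 (1\<^sub>m N) + kron (1\<^sub>m N) H2) * Wm N U"
proof -
  let ?Ua = "mat_adjoint U" and ?I = "1\<^sub>m N :: cmat" and ?S = "sw N"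
  have I: "?I \<in> carrier_mat N N" by simp
  have S: "?S \<in> carrier_mat (N*N) (N*N)" by simp
  have I1: "?Ua * ?I = ?Ua" "?I * ?Ua = ?Ua" "U * ?I = U" "?I * U = U" "H1 * ?I = H1" "?I * H1 = H1"
    "H2 * ?I = H2" "?I * H2 = H2"
    using Ua U H1 H2 by (auto simp: right_mult_one_mat left_mult_one_mat)
  have UH1: "U * H1 \<in> carrier_mat N N" "H1 * ?Ua \<in> carrier_mat N N" "U * H1 * ?Ua \<in> carrier_mat N N"
    using U H1 Ua by auto
  have h2u: "H2 * U = U * H1 + \<kappa> \<cdot>\<^sub>m U"
  proof -
    have "H2 * U = U * H1 * ?Ua * U + (\<kappa> \<cdot>\<^sub>m ?I) * U"
      unfolding E using UH1 U by (intro add_mult_distrib_mat[of _ N N]) auto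
    also have "U * H1 * ?Ua * U = U * H1" using UH1 Ua U UU right_mult_one_mat[OF UH1(1)]
      by (simp add: assoc_mult_mat[of _ N N _ N _ N])
    also have "(\<kappa> \<cdot>\<^sub>m ?I) * U = \<kappa> \<cdot>\<^sub>m U" using U by (simp add: mult_smult_assoc_mat[of _ N N])
    finally show ?thesis .
  qed
  have uh2: "?Ua * H2 = H1 * ?Ua + \<kappa> \<cdot>\<^sub>m ?Ua"
  proof -
    have "?Ua * H2 = ?Ua * (U * H1 * ?Ua) + ?Ua * (\<kappa> \<cdot>\<^sub>m ?I)"
      unfolding E using UH1 Ua by (intro mult_add_distrib_mat[of _ N N]) auto
    also have "?Ua * (U * H1 * ?Ua) = H1 * ?Ua" using UH1 Ua U UU H1
      by (simp add: assoc_mult_mat[of _ N N _ N _ N] mult_carrier_sq cancel_l[OF U UU])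
    also have "?Ua * (\<kappa> \<cdot>\<^sub>m ?I) = \<kappa> \<cdot>\<^sub>m (?Ua * ?I)" using Ua I by (rule mult_smult_distrib)
    also have "?Ua * ?I = ?Ua" using Ua by (rule right_mult_one_mat)
    finally show ?thesis .
  qed
  have KK: "kron H1 ?I \<in> carrier_mat (N*N) (N*N)" "kron ?I H2 \<in> carrier_mat (N*N) (N*N)"
    "kron ?I H1 \<in> carrier_mat (N*N) (N*N)" "kron H2 ?I \<in> carrier_mat (N*N) (N*N)"
    "kron ?Ua U \<in> carrier_mat (N*N) (N*N)"
    using H1 H2 U Ua by auto
  have SH: "?S * (kron H1 ?I + kron ?I H2) = (kron ?I H1 + kron H2 ?I) * ?S"
  proof -
    have "?S * (kron H1 ?I + kron ?I H2) = ?S * kron H1 ?I + ?S * kron ?I H2"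
      using S KK by (intro mult_add_distrib_mat[of _ "N*N" "N*N"]) auto
    also have "\<dots> = kron ?I H1 * ?S + kron H2 ?I * ?S" using sw_kron H1 H2 I by simp
    also have "\<dots> = (kron ?I H1 + kron H2 ?I) * ?S"
      using S KK by (intro add_mult_distrib_mat[of _ "N*N" "N*N", symmetric]) auto
    finally show ?thesis .
  qed
  define a where "a = kron ?Ua (U * H1)"
  define b where "b = kron (H1 * ?Ua) U"
  define c where "c = \<kappa> \<cdot>\<^sub>m kron ?Ua U"
  have abc: "a \<in> carrier_mat (N*N) (N*N)" "b \<in> carrier_mat (N*N) (N*N)" "c \<in> carrier_mat (N*N) (N*N)"
    unfolding a_def b_def c_def using UH1 U Ua by auto
  have L: "Wm N U * (kron H1 ?I + kron ?I H2) = (a + (b + c)) * ?S"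
  proof -
    have "Wm N U * (kron H1 ?I + kron ?I H2) = kron ?Ua U * (?S * (kron H1 ?I + kron ?I H2))"
      unfolding Wm_def using KK S by (intro assoc_mult_mat[of _ "N*N" "N*N" _ "N*N" _ "N*N"]) auto
    also have "\<dots> = kron ?Ua U * ((kron ?I H1 + kron H2 ?I) * ?S)" unfolding SH ..
    also have "\<dots> = (kron ?Ua U * (kron ?I H1 + kron H2 ?I)) * ?S"
      using KK S by (intro assoc_mult_mat[of _ "N*N" "N*N" _ "N*N" _ "N*N", symmetric]) auto
    also have "kron ?Ua U * (kron ?I H1 + kron H2 ?I) = kron ?Ua U * kron ?I H1 + kron ?Ua U * kron H2 ?I"
      using KK by (intro mult_add_distrib_mat[of _ "N*N" "N*N"]) auto
    also have "kron ?Ua U * kron ?I H1 = a" unfolding a_def using kron_mult[OF Ua U I H1] Ua I1 by simp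
    also have "kron ?Ua U * kron H2 ?I = kron (?Ua * H2) U" using kron_mult[OF Ua U H2 I] U I1 by simp
    also have "\<dots> = b + c" unfolding uh2 b_def c_def
      using H1 Ua by (simp add: kron_add_left[of _ N N] kron_smult_left)
    finally show ?thesis using abc by simp
  qed
  have R: "(kron H1 ?I + kron ?I H2) * Wm N U = (b + (a + c)) * ?S"
  proof -
    have "(kron H1 ?I + kron ?I H2) * Wm N U = ((kron H1 ?I + kron ?I H2) * kron ?Ua U) * ?S"
      unfolding Wm_def using KK S by (intro assoc_mult_mat[of _ "N*N" "N*N" _ "N*N" _ "N*N", symmetric]) auto
    also have "(kron H1 ?I + kron ?I H2) * kron ?Ua U = kron H1 ?I * kron ?Ua U + kron ?I H2 * kron ?Ua U"
      using KK by (intro add_mult_distrib_mat[of _ "N*N" "N*N"]) auto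
    also have "kron H1 ?I * kron ?Ua U = b" unfolding b_def using kron_mult[OF H1 I Ua U] U I1 by simp
    also have "kron ?I H2 * kron ?Ua U = kron ?Ua (H2 * U)" using kron_mult[OF I H2 Ua U] Ua I1 by simp
    also have "\<dots> = a + c" unfolding h2u a_def c_def
      using UH1 U by (simp add: kron_add_right[of _ N N] kron_smult_right)
    finally show ?thesis .
  qed
  have "a + (b + c) = b + (a + c)"
    using abc by (metis assoc_add_mat comm_add_mat)
  then show ?thesis using L R by simp
qed

end

lemma phys_facts: assumes "physical H"
  shows "H \<in> carrier_mat (dim_row H) (dim_row H)" "mat_adjoint H = H" "dim_row H > 0"
  using assms unfolding physical_def psd_def hermitian_def square_mat.simps
  by (auto intro: carrier_matI)

lemma ham_diag: assumes "physical H"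
  shows "\<exists>V d. V \<in> carrier_mat (dim_row H) (dim_row H) \<and> mat_adjoint V * V = 1\<^sub>m (dim_row H)
    \<and> V * mat_adjoint V = 1\<^sub>m (dim_row H) \<and> H = V * dm (dim_row H) (\<lambda>i. complex_of_real (d i)) * mat_adjoint V"
  using spectral[OF phys_facts(1,2)[OF assms]] by blast

lemma ham_sum_diag: fixes VA VB :: cmat and dA dB :: "nat \<Rightarrow> real"
  assumes VA: "VA \<in> carrier_mat a a" and VB: "VB \<in> carrier_mat b b" and VB': "VB * mat_adjoint VB = 1\<^sub>m b"
  and VA': "VA * mat_adjoint VA = 1\<^sub>m a"
  and HA: "HA = VA * dm a (\<lambda>i. complex_of_real (dA i)) * mat_adjoint VA"
  and HB: "HB = VB * dm b (\<lambda>i. complex_of_real (dB i)) * mat_adjoint VB"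
  shows "ham_sum HA HB = kron VA VB * dm (a*b) (\<lambda>i. complex_of_real (dA (i div b) + dB (i mod b))) * mat_adjoint (kron VA VB)"
proof -
  have ra: "dim_row HA = a" and rb: "dim_row HB = b" using VA VB HA HB by auto
  have 1: "1\<^sub>m b = VB * dm b (\<lambda>_. 1) * mat_adjoint VB" using VB VB' by (simp add: dm_one)
  have 2: "1\<^sub>m a = VA * dm a (\<lambda>_. 1) * mat_adjoint VA" using VA VA' by (simp add: dm_one)
  have P: "kron VA VB \<in> carrier_mat (a*b) (a*b)" using VA VB by auto
  have "ham_sum HA HB = kron VA VB * dm (a*b) (\<lambda>i. complex_of_real (dA (i div b)) * 1) * mat_adjoint (kron VA VB)
     + kron VA VB * dm (a*b) (\<lambda>i. 1 * complex_of_real (dB (i mod b))) * mat_adjoint (kron VA VB)"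
  proof -
    have k1: "kron HA (1\<^sub>m b) = kron (VA * dm a (\<lambda>i. complex_of_real (dA i)) * mat_adjoint VA) (VB * dm b (\<lambda>_. 1) * mat_adjoint VB)"
      by (simp only: HA 1)
    have k2: "kron (1\<^sub>m a) HB = kron (VA * dm a (\<lambda>_. 1) * mat_adjoint VA) (VB * dm b (\<lambda>i. complex_of_real (dB i)) * mat_adjoint VB)"
      by (simp only: HB 2)
    show ?thesis unfolding ham_sum_def ra rb k1 k2 kron_conj[OF VA VB] ..
  qed
  also have "\<dots> = kron VA VB * dm (a*b) (\<lambda>i. complex_of_real (dA (i div b)) * 1 + 1 * complex_of_real (dB (i mod b))) * mat_adjoint (kron VA VB)"
    by (rule conj_diag_add[OF P])
  finally show ?thesis by simp
qed

lemma gibbs_kron_diag: fixes VA VB :: cmat and dA dB :: "nat \<Rightarrow> real"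
  assumes VA: "VA \<in> carrier_mat a a" and VB: "VB \<in> carrier_mat b b"
  shows "kron (VA * dm a (\<lambda>i. complex_of_real (exp (- \<beta> * dA i) / ZA)) * mat_adjoint VA)
              (VB * dm b (\<lambda>i. complex_of_real (exp (- \<beta> * dB i) / ZB)) * mat_adjoint VB)
    = kron VA VB * dm (a*b) (\<lambda>i. complex_of_real (exp (- \<beta> * (dA (i div b) + dB (i mod b))) / (ZA * ZB))) * mat_adjoint (kron VA VB)"
proof -
  have "(\<lambda>i. complex_of_real (exp (- \<beta> * dA (i div b)) / ZA) * complex_of_real (exp (- \<beta> * dB (i mod b)) / ZB))
      = (\<lambda>i. complex_of_real (exp (- \<beta> * (dA (i div b) + dB (i mod b))) / (ZA * ZB)))"
  proof (rule ext)
    fix i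
    have "exp (- \<beta> * (dA (i div b) + dB (i mod b))) = exp (- \<beta> * dA (i div b)) * exp (- \<beta> * dB (i mod b))"
      by (simp add: distrib_left exp_add[symmetric])
    then show "complex_of_real (exp (- \<beta> * dA (i div b)) / ZA) * complex_of_real (exp (- \<beta> * dB (i mod b)) / ZB)
      = complex_of_real (exp (- \<beta> * (dA (i div b) + dB (i mod b))) / (ZA * ZB))"
      by (simp add: of_real_mult[symmetric] del: of_real_mult)
  qed
  then show ?thesis unfolding kron_conj[OF VA VB] by simp
qed


theorem lemma1:
  fixes \<beta> :: real and HA HB HA' HB' U :: "complex mat"
  assumes "\<beta> > 0"
    and "physical HA" and "physical HB" and "physical HA'" and "physical HB'"
    and "dim_row HA * dim_row HB = dim_row HA' * dim_row HB'"
    and "unitary U"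
    and "U \<in> carrier_mat (dim_row HA' * dim_row HB') (dim_row HA * dim_row HB)"
    and "U * kron (gibbs \<beta> HA) (gibbs \<beta> HB) * mat_adjoint U
           = kron (gibbs \<beta> HA') (gibbs \<beta> HB')"
  shows "\<exists>T. thermal_op \<beta> [HA] [HA'] T \<and>
    (\<forall>\<omega>. density (dim_row HA) \<omega> \<longrightarrow>
       T \<omega> = ptrace2 (dim_row HA') (dim_row HB')
                 (U * kron \<omega> (gibbs \<beta> HB) * mat_adjoint U))"
proof -
  note \<beta> = assms(1) and pA = assms(2) and pB = assms(3) and pA' = assms(4) and pB' = assms(5)
  define nA where "nA = dim_row HA"
  define nB where "nB = dim_row HB"
  define nA2 where "nA2 = dim_row HA'"
  define nB2 where "nB2 = dim_row HB'"
  define N where "N = nA2 * nB2"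
  have hN: "nA * nB = N" using assms(6) unfolding nA_def nB_def N_def nA2_def nB2_def .
  have Uc: "U \<in> carrier_mat N N" using assms(8) hN unfolding nA_def nB_def N_def nA2_def nB2_def by simp
  have UU: "mat_adjoint U * U = 1\<^sub>m N" "U * mat_adjoint U = 1\<^sub>m N"
    using assms(7) Uc unfolding unitary_def by auto
  have HAc: "HA \<in> carrier_mat nA nA" and HBc: "HB \<in> carrier_mat nB nB"
    and HA'c: "HA' \<in> carrier_mat nA2 nA2" and HB'c: "HB' \<in> carrier_mat nB2 nB2"
    using phys_facts(1) pA pB pA' pB' unfolding nA_def nB_def nA2_def nB2_def by auto
  have n0: "nA > 0" "nB > 0" "nA2 > 0" "nB2 > 0"
    using phys_facts(3) pA pB pA' pB' unfolding nA_def nB_def nA2_def nB2_def by auto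
  obtain VA dA where VA: "VA \<in> carrier_mat nA nA" "mat_adjoint VA * VA = 1\<^sub>m nA" "VA * mat_adjoint VA = 1\<^sub>m nA"
    and HAd: "HA = VA * dm nA (\<lambda>i. complex_of_real (dA i)) * mat_adjoint VA"
    using ham_diag[OF pA] unfolding nA_def by blast
  obtain VB dB where VB: "VB \<in> carrier_mat nB nB" "mat_adjoint VB * VB = 1\<^sub>m nB" "VB * mat_adjoint VB = 1\<^sub>m nB"
    and HBd: "HB = VB * dm nB (\<lambda>i. complex_of_real (dB i)) * mat_adjoint VB"
    using ham_diag[OF pB] unfolding nB_def by blast
  obtain VA' dA' where VA': "VA' \<in> carrier_mat nA2 nA2" "mat_adjoint VA' * VA' = 1\<^sub>m nA2" "VA' * mat_adjoint VA' = 1\<^sub>m nA2"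
    and HA'd: "HA' = VA' * dm nA2 (\<lambda>i. complex_of_real (dA' i)) * mat_adjoint VA'"
    using ham_diag[OF pA'] unfolding nA2_def by blast
  obtain VB' dB' where VB': "VB' \<in> carrier_mat nB2 nB2" "mat_adjoint VB' * VB' = 1\<^sub>m nB2" "VB' * mat_adjoint VB' = 1\<^sub>m nB2"
    and HB'd: "HB' = VB' * dm nB2 (\<lambda>i. complex_of_real (dB' i)) * mat_adjoint VB'"
    using ham_diag[OF pB'] unfolding nB2_def by blast
  define ZA where "ZA = (\<Sum>j<nA. exp (- \<beta> * dA j))"
  define ZB where "ZB = (\<Sum>j<nB. exp (- \<beta> * dB j))"
  define ZA' where "ZA' = (\<Sum>j<nA2. exp (- \<beta> * dA' j))"
  define ZB' where "ZB' = (\<Sum>j<nB2. exp (- \<beta> * dB' j))"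
  note GA = gibbs_diag[OF VA n0(1) HAd, of \<beta>, folded ZA_def]
  note GB = gibbs_diag[OF VB n0(2) HBd, of \<beta>, folded ZB_def]
  note GA' = gibbs_diag[OF VA' n0(3) HA'd, of \<beta>, folded ZA'_def]
  note GB' = gibbs_diag[OF VB' n0(4) HB'd, of \<beta>, folded ZB'_def]
  define gA where "gA = gibbs \<beta> HA"
  define gB where "gB = gibbs \<beta> HB"
  define gA' where "gA' = gibbs \<beta> HA'"
  define gB' where "gB' = gibbs \<beta> HB'"
  have gAc: "gA \<in> carrier_mat nA nA" unfolding gA_def GA(1) using VA by (simp add: mult_carrier_sq)
  have gBc: "gB \<in> carrier_mat nB nB" unfolding gB_def GB(1) using VB by (simp add: mult_carrier_sq)
  have gA'c: "gA' \<in> carrier_mat nA2 nA2" unfolding gA'_def GA'(1) using VA' by (simp add: mult_carrier_sq)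
  have gB'c: "gB' \<in> carrier_mat nB2 nB2" unfolding gB'_def GB'(1) using VB' by (simp add: mult_carrier_sq)
  define P where "P = kron VA VB"
  define Q where "Q = kron VA' VB'"
  have Pc: "P \<in> carrier_mat N N" unfolding P_def using VA VB hN by (metis kron_carrier)
  have Qc: "Q \<in> carrier_mat N N" unfolding Q_def N_def using VA' VB' by (metis kron_carrier)
  have Pu: "mat_adjoint P * P = 1\<^sub>m N" "P * mat_adjoint P = 1\<^sub>m N"
    unfolding P_def hN[symmetric] using kron_unitary[OF VA(1) VB(1) VA(2,3) VB(2,3)] by auto
  have Qu: "mat_adjoint Q * Q = 1\<^sub>m N" "Q * mat_adjoint Q = 1\<^sub>m N"
    unfolding Q_def N_def using kron_unitary[OF VA'(1) VB'(1) VA'(2,3) VB'(2,3)] by auto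
  define d1 where "d1 = (\<lambda>i. dA (i div nB) + dB (i mod nB))"
  define d2 where "d2 = (\<lambda>i. dA' (i div nB2) + dB' (i mod nB2))"
  define H1 where "H1 = ham_sum HA HB"
  define H2 where "H2 = ham_sum HA' HB'"
  have H1d: "H1 = P * dm N (\<lambda>i. complex_of_real (d1 i)) * mat_adjoint P"
    unfolding H1_def P_def d1_def hN[symmetric] by (rule ham_sum_diag[OF VA(1) VB(1) VB(3) VA(3) HAd HBd])
  have H2d: "H2 = Q * dm N (\<lambda>i. complex_of_real (d2 i)) * mat_adjoint Q"
    unfolding H2_def Q_def d2_def N_def by (rule ham_sum_diag[OF VA'(1) VB'(1) VB'(3) VA'(3) HA'd HB'd])
  have H1c: "H1 \<in> carrier_mat N N" unfolding H1d using Pc by (simp add: mult_carrier_sq)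
  have H2c: "H2 \<in> carrier_mat N N" unfolding H2d using Qc by (simp add: mult_carrier_sq)
  define g1 where "g1 = kron gA gB"
  define g2 where "g2 = kron gA' gB'"
  have g1d: "g1 = P * dm N (\<lambda>i. complex_of_real (exp (- \<beta> * d1 i) / (ZA * ZB))) * mat_adjoint P"
    unfolding g1_def gA_def gB_def GA(1) GB(1) P_def d1_def hN[symmetric] by (rule gibbs_kron_diag[OF VA(1) VB(1)])
  have g2d: "g2 = Q * dm N (\<lambda>i. complex_of_real (exp (- \<beta> * d2 i) / (ZA' * ZB'))) * mat_adjoint Q"
    unfolding g2_def gA'_def gB'_def GA'(1) GB'(1) Q_def d2_def N_def by (rule gibbs_kron_diag[OF VA'(1) VB'(1)])
  have g1c: "g1 \<in> carrier_mat N N" unfolding g1d using Pc by (simp add: mult_carrier_sq)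
  have g2c: "g2 \<in> carrier_mat N N" unfolding g2d using Qc by (simp add: mult_carrier_sq)
  have hyp: "U * g1 * mat_adjoint U = g2" using assms(9) unfolding g1_def g2_def gA_def gB_def gA'_def gB'_def .
  define W0 where "W0 = U * P"
  have W0c: "W0 \<in> carrier_mat N N" unfolding W0_def using Uc Pc by (simp add: mult_carrier_sq)
  have aW0: "mat_adjoint W0 = mat_adjoint P * mat_adjoint U" unfolding W0_def using Uc Pc by (simp add: adj_mult[of _ N N _ N])
  have Pa: "mat_adjoint P \<in> carrier_mat N N" and Ua: "mat_adjoint U \<in> carrier_mat N N" using Pc Uc by auto
  have W0u: "mat_adjoint W0 * W0 = 1\<^sub>m N" "W0 * mat_adjoint W0 = 1\<^sub>m N"
  proof -
    have "mat_adjoint W0 * W0 = mat_adjoint P * (mat_adjoint U * (U * P))"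
      unfolding aW0 unfolding W0_def using Pa Ua Pc Uc by (simp add: assoc_mult_mat[of _ N N _ N _ N] mult_carrier_sq)
    also have "\<dots> = 1\<^sub>m N" using cancel_l[OF Uc UU(1), of P] cancel_l[OF Pc Pu(1), of "1\<^sub>m N"] Pc Pu by simp
    finally show "mat_adjoint W0 * W0 = 1\<^sub>m N" .
    have "W0 * mat_adjoint W0 = U * (P * (mat_adjoint P * mat_adjoint U))"
      unfolding aW0 unfolding W0_def using Pc Uc Pa Ua by (simp add: assoc_mult_mat[of _ N N _ N _ N] mult_carrier_sq)
    also have "\<dots> = 1\<^sub>m N" using cancel_l'[OF Pc Pu(2), of "mat_adjoint U"] Ua UU Uc by simp
    finally show "W0 * mat_adjoint W0 = 1\<^sub>m N" .
  qed
  have conjW0: "U * (P * X * mat_adjoint P) * mat_adjoint U = W0 * X * mat_adjoint W0" if X: "X \<in> carrier_mat N N" for X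
    unfolding aW0 unfolding W0_def using X Pc Uc Pa Ua by (simp add: assoc_mult_mat[of _ N N _ N _ N] mult_carrier_sq)
  have E: "W0 * dm N (\<lambda>i. complex_of_real (exp (- \<beta> * d1 i) / (ZA * ZB))) * mat_adjoint W0
      = Q * dm N (\<lambda>i. complex_of_real (exp (- \<beta> * d2 i) / (ZA' * ZB'))) * mat_adjoint Q"
    using hyp unfolding g1d g2d conjW0[OF dm_carrier(1)] .
  have Zpos: "ZA * ZB > 0" "ZA' * ZB' > 0" using GA(3) GB(3) GA'(3) GB'(3) by auto
  obtain \<kappa> where K: "Q * dm N (\<lambda>i. complex_of_real (d2 i)) * mat_adjoint Q
           = W0 * dm N (\<lambda>i. complex_of_real (d1 i + \<kappa>)) * mat_adjoint W0"
    using exp_inj[OF W0c W0u Qc Qu Zpos \<beta> E] by blast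
  have H2eq: "H2 = U * H1 * mat_adjoint U + complex_of_real \<kappa> \<cdot>\<^sub>m 1\<^sub>m N"
  proof -
    have "H2 = W0 * dm N (\<lambda>i. complex_of_real (d1 i) + complex_of_real \<kappa>) * mat_adjoint W0"
      unfolding H2d K by simp
    also have "\<dots> = W0 * dm N (\<lambda>i. complex_of_real (d1 i)) * mat_adjoint W0 + W0 * dm N (\<lambda>i. complex_of_real \<kappa>) * mat_adjoint W0"
      by (rule conj_diag_add[OF W0c, symmetric])
    also have "W0 * dm N (\<lambda>i. complex_of_real (d1 i)) * mat_adjoint W0 = U * H1 * mat_adjoint U"
      unfolding H1d conjW0[OF dm_carrier(1)] ..
    also have "W0 * dm N (\<lambda>i. complex_of_real \<kappa>) * mat_adjoint W0 = complex_of_real \<kappa> \<cdot>\<^sub>m (W0 * dm N (\<lambda>i. 1) * mat_adjoint W0)"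
      using conj_diag_smult[OF W0c, of "complex_of_real \<kappa>" "\<lambda>i. 1"] by simp
    also have "W0 * dm N (\<lambda>i. 1) * mat_adjoint W0 = 1\<^sub>m N" using W0c W0u by (simp add: dm_one)
    finally show ?thesis .
  qed
  define W where "W = Wm N U"
  have Wc: "W \<in> carrier_mat (N*N) (N*N)" unfolding W_def by (rule Wm_carrier[OF Uc UU])
  have Wu: "mat_adjoint W * W = 1\<^sub>m (N*N)" "W * mat_adjoint W = 1\<^sub>m (N*N)"
    unfolding W_def by (rule Wm_unitary[OF Uc UU])+
  have Wcomm: "W * (kron H1 (1\<^sub>m N) + kron (1\<^sub>m N) H2) = (kron H1 (1\<^sub>m N) + kron (1\<^sub>m N) H2) * W"
    unfolding W_def by (rule Wm_comm[OF Uc UU H1c H2c H2eq])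
  have sysham: "sys_ham [HA, HB, HA', HB'] = kron H1 (1\<^sub>m N) + kron (1\<^sub>m N) H2"
  proof -
    have "sys_ham [HA, HB, HA', HB'] = ham_sum (ham_sum (ham_sum (ham_sum (0\<^sub>m 1 1) HA) HB) HA') HB'"
      unfolding sys_ham_def by simp
    also have "ham_sum (0\<^sub>m 1 1) HA = HA" by (rule ham_sum_zero[OF HAc])
    also have "ham_sum (ham_sum (ham_sum HA HB) HA') HB' = ham_sum (ham_sum HA HB) (ham_sum HA' HB')"
      by (rule ham_sum_assoc[OF ham_sum_carrier[OF HAc HBc] HA'c HB'c])
    also have "\<dots> = kron H1 (1\<^sub>m N) + kron (1\<^sub>m N) H2"
      unfolding H1_def[symmetric] H2_def[symmetric] unfolding ham_sum_def using H1c H2c by simp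
    finally show ?thesis .
  qed
  have sd4: "sys_dim [HA, HB, HA', HB'] = N * N"
    unfolding sys_dim_def using hN N_def nA_def nB_def nA2_def nB2_def by (simp add: mult.assoc[symmetric])
  have s1: "thermal_step \<beta> [HA] [HA, HB] (\<lambda>\<rho>. kron \<rho> gB)"
    using thermal_step.append_gibbs[OF pB, of \<beta> "[HA]"] unfolding gB_def by simp
  have s2: "thermal_step \<beta> [HA, HB] [HA, HB, HA'] (\<lambda>\<rho>. kron \<rho> gA')"
    using thermal_step.append_gibbs[OF pA', of \<beta> "[HA, HB]"] unfolding gA'_def by simp
  have s3: "thermal_step \<beta> [HA, HB, HA'] [HA, HB, HA', HB'] (\<lambda>\<rho>. kron \<rho> gB')"
    using thermal_step.append_gibbs[OF pB', of \<beta> "[HA, HB, HA']"] unfolding gB'_def by simp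
  have s4: "thermal_step \<beta> [HA, HB, HA', HB'] [HA, HB, HA', HB'] (\<lambda>\<rho>. W * \<rho> * mat_adjoint W)"
  proof (rule thermal_step.energy_unitary)
    show "unitary W" unfolding unitary_def using Wc Wu by auto
    show "W \<in> carrier_mat (sys_dim [HA, HB, HA', HB']) (sys_dim [HA, HB, HA', HB'])" unfolding sd4 by (rule Wc)
    show "W * sys_ham [HA, HB, HA', HB'] = sys_ham [HA, HB, HA', HB'] * W" unfolding sysham by (rule Wcomm)
  qed
  have s5: "thermal_step \<beta> [HA, HB, HA', HB'] [HB, HA', HB'] (ptrace_mid 1 nA (nB * N))"
    using thermal_step.trace_out[of 0 "[HA, HB, HA', HB']" \<beta>]
    unfolding sys_dim_def nA_def nB_def N_def nA2_def nB2_def by simp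
  have s6: "thermal_step \<beta> [HB, HA', HB'] [HA', HB'] (ptrace_mid 1 nB N)"
    using thermal_step.trace_out[of 0 "[HB, HA', HB']" \<beta>]
    unfolding sys_dim_def nB_def N_def nA2_def nB2_def by simp
  have s7: "thermal_step \<beta> [HA', HB'] [HA'] (ptrace_mid nA2 nB2 1)"
    using thermal_step.trace_out[of 1 "[HA', HB']" \<beta>]
    unfolding sys_dim_def nA2_def nB2_def by simp
  define T where "T = ptrace_mid nA2 nB2 1 \<circ> (ptrace_mid 1 nB N \<circ> (ptrace_mid 1 nA (nB * N) \<circ>
    ((\<lambda>\<rho>. W * \<rho> * mat_adjoint W) \<circ> ((\<lambda>\<rho>. kron \<rho> gB') \<circ> ((\<lambda>\<rho>. kron \<rho> gA') \<circ> ((\<lambda>\<rho>. kron \<rho> gB) \<circ> (\<lambda>\<rho>. \<rho>)))))))"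
  have TO: "thermal_op \<beta> [HA] [HA'] T"
    unfolding T_def
    by (rule thermal_op.step[OF thermal_op.step[OF thermal_op.step[OF thermal_op.step[OF thermal_op.step[OF
          thermal_op.step[OF thermal_op.step[OF thermal_op.refl s1] s2] s3] s4] s5] s6] s7])
  have TV: "T \<omega> = ptrace2 (dim_row HA') (dim_row HB') (U * kron \<omega> (gibbs \<beta> HB) * mat_adjoint U)"
    if dens: "density (dim_row HA) \<omega>" for \<omega>
  proof -
    have \<omega>c: "\<omega> \<in> carrier_mat nA nA" using dens unfolding density_def nA_def by simp
    define \<rho> where "\<rho> = kron \<omega> gB"
    have \<rho>c: "\<rho> \<in> carrier_mat N N" unfolding \<rho>_def using \<omega>c gBc hN by (metis kron_carrier)
    define \<sigma> where "\<sigma> = U * \<rho> * mat_adjoint U"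
    have \<sigma>c: "\<sigma> \<in> carrier_mat N N" unfolding \<sigma>_def using Uc \<rho>c Ua by (simp add: mult_carrier_sq)
    have g1': "mat_adjoint U * g2 * U = g1"
    proof -
      have "mat_adjoint U * g2 * U = mat_adjoint U * (U * (g1 * (mat_adjoint U * U)))"
        unfolding hyp[symmetric] using Uc Ua g1c by (simp add: assoc_mult_mat[of _ N N _ N _ N] mult_carrier_sq)
      also have "\<dots> = g1" using UU g1c Uc cancel_l[OF Uc UU(1), of g1] by simp
      finally show ?thesis .
    qed
    have "W * kron (kron (kron \<omega> gB) gA') gB' * mat_adjoint W = W * kron \<rho> g2 * mat_adjoint W"
      unfolding \<rho>_def g2_def kron_assoc ..
    also have "\<dots> = kron (mat_adjoint U * g2 * U) \<sigma>"
      unfolding W_def \<sigma>_def by (rule Wm_state[OF Uc UU \<rho>c g2c])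
    also have "\<dots> = kron gA (kron gB \<sigma>)" unfolding g1' g1_def kron_assoc ..
    finally have st: "W * kron (kron (kron \<omega> gB) gA') gB' * mat_adjoint W = kron gA (kron gB \<sigma>)" .
    have kc: "kron gB \<sigma> \<in> carrier_mat (nB * N) (nB * N)" using gBc \<sigma>c by simp
    have trA: "mtrace gA = 1" unfolding gA_def by (rule GA(2))
    have trB: "mtrace gB = 1" unfolding gB_def by (rule GB(2))
    have "T \<omega> = ptrace_mid nA2 nB2 1 (ptrace_mid 1 nB N (ptrace_mid 1 nA (nB * N)
                (W * kron (kron (kron \<omega> gB) gA') gB' * mat_adjoint W)))"
      unfolding T_def by simp
    also have "\<dots> = ptrace_mid nA2 nB2 1 \<sigma>"
      unfolding st ptrace_kron[OF gAc kc trA] ptrace_kron[OF gBc \<sigma>c trB] ..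
    also have "\<dots> = ptrace2 (dim_row HA') (dim_row HB') (U * kron \<omega> (gibbs \<beta> HB) * mat_adjoint U)"
      unfolding ptrace2_def \<sigma>_def \<rho>_def gB_def nA2_def nB2_def ..
    finally show ?thesis .
  qed
  show ?thesis using TO TV by blast
qed

end
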